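(* Let $X$ be a locally convex space, let $T:X\rightrightarrows X^{*}$, and let $V\subset X$ with $V\cap D(T)\neq\emptyset$. Consider: (i) $T|_{V}\in\mathcal{M}(X)$ and $V$ identifies $T$; (ii) $T$ is $V$-representable and $V$ locates $T$; (iii) $T$ is $V$-representable and $V$-NI. Then (i) $\Rightarrow$ (ii) $\Rightarrow$ (iii). If, in addition, $V$ is algebraically open, then (i), (ii), (iii) are equivalent.
   Context: $(X,\tau)$ is a non-trivial Hausdorff locally convex space, $X^*$ its dual with weak-star topology $\omega^*$, $Z=X\times X^*$ with topology $\tau\times\omega^*$, $c(x,x^* )=\langle x,x^*\rangle$. Operators are identified with their graphs; $D(T)$ is the domain; $T|_V$ has graph $\operatorname{Graph}T\cap(V\times X^* )$. $\varphi_{T}(x,x^{*})=\sup\{\langle x,u^{*}\rangle+\langle u,x^{*}\rangle-\langle u,u^{*}\rangle\mid(u,u^{*})\in T\}$ ($\sup\emptyset=-\infty$); $[f\le g]=\{z\mid f(z)\le g(z)\}$. $\mathcal M(X)$: monotone operators with non-empty graph. $\mathscr R$: proper convex $\tau\times\omega^*$-lsc $h:Z\to\overline{\mathbb R}$ with $h\ge c$. $T$ is $V$-representable if $V\cap D(T)\ne\emptyset$ and there is $h\in\mathscr R$ with $[h=c]\cap(V\times X^* )=\operatorname{Graph}(T|_V)$. $V$ identifies $T$ if $[\varphi_{T|_V}\le c]\cap(V\times X^* )\subset\operatorname{Graph}T$; $V$ locates $T$ if $\operatorname{Pr}_X([\varphi_{T|_V}\le c])\cap V\subset D(T)$; $T$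 is $V$-NI if $\varphi_{T|_V}\ge c$ on $V\times X^*$. $V$ is algebraically open if $V$ equals its algebraic interior (core). *)

theory Defs
  imports "HOL-Analysis.Analysis"
begin

text \<open>An operator T : X \<rightrightarrows> X* is identified with its graph, a set of pairs.\<close>

definition lcs :: "'a::real_vector topology \<Rightarrow> bool" where
  "lcs tau \<longleftrightarrow> topspace tau = UNIV
     \<and> continuous_map (prod_topology tau tau) tau (\<lambda>(x, y). x + y)
     \<and> continuous_map (prod_topology euclideanreal tau) tau (\<lambda>(a, x). a *\<^sub>R x)
     \<and> Hausdorff_space tau
     \<and> (\<forall>U. openin tau U \<and> 0 \<in> U \<longrightarrow> (\<exists>W. openin tau W \<and> convex W \<and> 0 \<in> W \<and> W \<subseteq> U))"

definition dual_space :: "'a::real_vector topology \<Rightarrow> ('a \<Rightarrow> real) set" where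
  "dual_space tau = {f. linear f \<and> continuous_map tau euclideanreal f}"

definition weak_star :: "'a::real_vector topology \<Rightarrow> ('a \<Rightarrow> real) topology" where
  "weak_star tau = subtopology (product_topology (\<lambda>_::'a. euclideanreal) UNIV) (dual_space tau)"

definition Ztop :: "'a::real_vector topology \<Rightarrow> ('a \<times> ('a \<Rightarrow> real)) topology" where
  "Ztop tau = prod_topology tau (weak_star tau)"

definition Zset :: "'a::real_vector topology \<Rightarrow> ('a \<times> ('a \<Rightarrow> real)) set" where
  "Zset tau = UNIV \<times> dual_space tau"

definition cpl :: "'a \<times> ('a \<Rightarrow> real) \<Rightarrow> ereal" where
  "cpl z = ereal (snd z (fst z))"

definition fitz :: "('a::real_vector \<times> ('a \<Rightarrow> real)) set \<Rightarrow> 'a \<times> ('a \<Rightarrow> real) \<Rightarrow> ereal" where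
  "fitz T z = Sup {ereal (snd z u + us (fst z) - us u) | u us. (u, us) \<in> T}"

definition restr :: "('a \<times> 'b) set \<Rightarrow> 'a set \<Rightarrow> ('a \<times> 'b) set" where
  "restr T V = T \<inter> (V \<times> UNIV)"

definition monotone_op :: "('a::real_vector \<times> ('a \<Rightarrow> real)) set \<Rightarrow> bool" where
  "monotone_op T \<longleftrightarrow> (\<forall>x f y g. (x, f) \<in> T \<and> (y, g) \<in> T \<longrightarrow> f x - f y - g x + g y \<ge> 0)"

definition M_class :: "('a::real_vector \<times> ('a \<Rightarrow> real)) set \<Rightarrow> bool" where
  "M_class T \<longleftrightarrow> monotone_op T \<and> T \<noteq> {}"

text \<open>convexity of an extended-real function on Z = X \<times> X* (epigraph convexity)\<close>
definition convex_Z :: "'a::real_vector topology \<Rightarrow> ('a \<times> ('a \<Rightarrow> real) \<Rightarrow> ereal) \<Rightarrow> bool" where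
  "convex_Z tau h \<longleftrightarrow> (\<forall>x f y g r s t. (x, f) \<in> Zset tau \<and> (y, g) \<in> Zset tau
      \<and> h (x, f) \<le> ereal r \<and> h (y, g) \<le> ereal s \<and> 0 \<le> t \<and> t \<le> 1 \<longrightarrow>
      h (t *\<^sub>R x + (1 - t) *\<^sub>R y, \<lambda>u. t * f u + (1 - t) * g u) \<le> ereal (t * r + (1 - t) * s))"

definition proper_Z :: "'a::real_vector topology \<Rightarrow> ('a \<times> ('a \<Rightarrow> real) \<Rightarrow> ereal) \<Rightarrow> bool" where
  "proper_Z tau h \<longleftrightarrow> (\<forall>z \<in> Zset tau. h z > -\<infinity>) \<and> (\<exists>z \<in> Zset tau. h z < \<infinity>)"

definition lsc_Z :: "'a::real_vector topology \<Rightarrow> ('a \<times> ('a \<Rightarrow> real) \<Rightarrow> ereal) \<Rightarrow> bool" where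
  "lsc_Z tau h \<longleftrightarrow> (\<forall>r::real. closedin (Ztop tau) {z \<in> topspace (Ztop tau). h z \<le> ereal r})"

definition R_class :: "'a::real_vector topology \<Rightarrow> ('a \<times> ('a \<Rightarrow> real) \<Rightarrow> ereal) set" where
  "R_class tau = {h. proper_Z tau h \<and> convex_Z tau h \<and> lsc_Z tau h \<and> (\<forall>z \<in> Zset tau. h z \<ge> cpl z)}"

definition V_representable :: "'a::real_vector topology \<Rightarrow> 'a set \<Rightarrow> ('a \<times> ('a \<Rightarrow> real)) set \<Rightarrow> bool" where
  "V_representable tau V T \<longleftrightarrow> V \<inter> Domain T \<noteq> {}
     \<and> (\<exists>h \<in> R_class tau. {z \<in> Zset tau. h z = cpl z} \<inter> (V \<times> UNIV) = restr T V)"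

definition V_identifies :: "'a::real_vector topology \<Rightarrow> 'a set \<Rightarrow> ('a \<times> ('a \<Rightarrow> real)) set \<Rightarrow> bool" where
  "V_identifies tau V T \<longleftrightarrow> {z \<in> Zset tau. fitz (restr T V) z \<le> cpl z} \<inter> (V \<times> UNIV) \<subseteq> T"

definition V_locates :: "'a::real_vector topology \<Rightarrow> 'a set \<Rightarrow> ('a \<times> ('a \<Rightarrow> real)) set \<Rightarrow> bool" where
  "V_locates tau V T \<longleftrightarrow> fst ` {z \<in> Zset tau. fitz (restr T V) z \<le> cpl z} \<inter> V \<subseteq> Domain T"

definition V_NI :: "'a::real_vector topology \<Rightarrow> 'a set \<Rightarrow> ('a \<times> ('a \<Rightarrow> real)) set \<Rightarrow> bool" where
  "V_NI tau V T \<longleftrightarrow> (\<forall>z \<in> Zset tau. fst z \<in> V \<longrightarrow> fitz (restr T V) z \<ge> cpl z)"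

definition core :: "'a::real_vector set \<Rightarrow> 'a set" where
  "core V = {x \<in> V. \<forall>d. \<exists>e>0. \<forall>t. 0 \<le> t \<and> t \<le> e \<longrightarrow> x + t *\<^sub>R d \<in> V}"

definition alg_open :: "'a::real_vector set \<Rightarrow> bool" where
  "alg_open V \<longleftrightarrow> core V = V"

end

theory Submission
  imports Defs "HOL-Library.Function_Algebras"
begin

instantiation "fun" :: (type, real_vector) real_vector
begin
definition scaleR_fun :: "real \<Rightarrow> ('a \<Rightarrow> 'b) \<Rightarrow> 'a \<Rightarrow> 'b" where
  "scaleR_fun r f = (\<lambda>x. r *\<^sub>R f x)"
instance
  by standard (auto simp: scaleR_fun_def fun_eq_iff scaleR_add_right scaleR_add_left)
end

lemma scaleR_fun_apply[simp]: "(r *\<^sub>R f) x = r *\<^sub>R f x"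
  by (simp add: scaleR_fun_def)

lemma dual_comb:
  assumes "f \<in> dual_space tau" "g \<in> dual_space tau"
  shows "(\<lambda>u. a * f u + b * g u) \<in> dual_space tau"
proof -
  have lf: "linear f" and lg: "linear g" using assms by (auto simp: dual_space_def)
  have "linear (\<lambda>u. a * f u + b * g u)"
    by (rule linearI) (auto simp: linear_add[OF lf] linear_add[OF lg] linear_scale[OF lf] linear_scale[OF lg] algebra_simps)
  moreover have "continuous_map tau euclideanreal (\<lambda>u. a * f u + b * g u)"
    using assms by (auto simp: dual_space_def intro!: continuous_map_add continuous_map_real_mult_left)
  ultimately show ?thesis by (simp add: dual_space_def)
qed


lemma fitz_upper: "(u,us) \<in> T \<Longrightarrow> ereal (snd z u + us (fst z) - us u) \<le> fitz T z"
  unfolding fitz_def by (rule Sup_upper) blast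

lemma fitz_least: "(\<And>u us. (u,us) \<in> T \<Longrightarrow> ereal (snd z u + us (fst z) - us u) \<le> b) \<Longrightarrow> fitz T z \<le> b"
  unfolding fitz_def by (rule Sup_least) blast

lemma fitz_mono: "S \<subseteq> T \<Longrightarrow> fitz S z \<le> fitz T z"
  by (rule fitz_least) (auto intro: fitz_upper)

lemma dual_linear: "us \<in> dual_space tau \<Longrightarrow> linear us"
  by (simp add: dual_space_def)

lemma fitz_convex:
  assumes T: "T \<subseteq> UNIV \<times> dual_space tau"
    and r: "fitz T (x, f) \<le> ereal r" and s: "fitz T (y, g) \<le> ereal s"
    and t: "0 \<le> t" "t \<le> 1"
  shows "fitz T (t *\<^sub>R x + (1 - t) *\<^sub>R y, \<lambda>u. t * f u + (1 - t) * g u) \<le> ereal (t * r + (1 - t) * s)"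
proof (rule fitz_least)
  fix u us assume uT: "(u, us) \<in> T"
  then have lin: "linear us" using T dual_linear by blast
  have a: "f u + us x - us u \<le> r"
    using order_trans[OF fitz_upper[OF uT, of "(x,f)"] r] by simp
  have b: "g u + us y - us u \<le> s"
    using order_trans[OF fitz_upper[OF uT, of "(y,g)"] s] by simp
  have eq: "us (t *\<^sub>R x + (1 - t) *\<^sub>R y) = t * us x + (1 - t) * us y"
    by (simp add: linear_add[OF lin] linear_scale[OF lin])
  have "t * (f u + us x - us u) \<le> t * r" using a t by (simp add: mult_left_mono)
  moreover have "(1 - t) * (g u + us y - us u) \<le> (1 - t) * s" using b t by (simp add: mult_left_mono)
  moreover have "snd (t *\<^sub>R x + (1 - t) *\<^sub>R y, \<lambda>u. t * f u + (1 - t) * g u) u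
      + us (fst (t *\<^sub>R x + (1 - t) *\<^sub>R y, \<lambda>u. t * f u + (1 - t) * g u)) - us u
      = t * (f u + us x - us u) + (1 - t) * (g u + us y - us u)"
    by (simp only: fst_conv snd_conv eq) (simp add: algebra_simps)
  ultimately show "ereal (snd (t *\<^sub>R x + (1 - t) *\<^sub>R y, \<lambda>u. t * f u + (1 - t) * g u) u
      + us (fst (t *\<^sub>R x + (1 - t) *\<^sub>R y, \<lambda>u. t * f u + (1 - t) * g u)) - us u)
      \<le> ereal (t * r + (1 - t) * s)"
    by simp
qed

lemma topspace_weak_star: "topspace (weak_star tau) = dual_space tau"
  by (simp add: weak_star_def)

lemma topspace_Ztop: "lcs tau \<Longrightarrow> topspace (Ztop tau) = Zset tau"
  by (simp add: Ztop_def Zset_def topspace_weak_star lcs_def)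

lemma cont_eval: "continuous_map (weak_star tau) euclideanreal (\<lambda>f. f u)"
  unfolding weak_star_def
  by (rule continuous_map_from_subtopology) (rule continuous_map_product_projection[of u UNIV "\<lambda>_. euclideanreal", simplified])

lemma cont_affine:
  assumes "us \<in> dual_space tau"
  shows "continuous_map (Ztop tau) euclideanreal (\<lambda>z. snd z u + us (fst z) - us u)"
proof -
  have 1: "continuous_map (Ztop tau) euclideanreal (\<lambda>z. snd z u)"
    unfolding Ztop_def using continuous_map_compose[OF continuous_map_snd cont_eval]
    by (simp add: o_def)
  have 2: "continuous_map (Ztop tau) euclideanreal (\<lambda>z. us (fst z))"
  proof -
    have "continuous_map tau euclideanreal us" using assms by (simp add: dual_space_def)
    from continuous_map_compose[OF continuous_map_fst this, of "weak_star tau"]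
    show ?thesis by (simp add: o_def Ztop_def)
  qed
  show ?thesis using 1 2 by (intro continuous_map_diff continuous_map_add) auto
qed

lemma fitz_lsc:
  assumes T: "T \<subseteq> UNIV \<times> dual_space tau"
  shows "lsc_Z tau (fitz T)"
  unfolding lsc_Z_def
proof
  fix r :: real
  have eq: "{z \<in> topspace (Ztop tau). fitz T z \<le> ereal r} =
     \<Inter> (insert (topspace (Ztop tau))
       ((\<lambda>(u,us). {z \<in> topspace (Ztop tau). (\<lambda>z. snd z u + us (fst z) - us u) z \<in> {..r}}) ` T))"
  proof (intro equalityI subsetI)
    fix z assume "z \<in> {z \<in> topspace (Ztop tau). fitz T z \<le> ereal r}"
    then have z: "z \<in> topspace (Ztop tau)" "fitz T z \<le> ereal r" by auto
    have "snd z u + us (fst z) - us u \<le> r" if "(u,us) \<in> T" for u us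
      using order_trans[OF fitz_upper[OF that, of z] z(2)] by simp
    with z show "z \<in> \<Inter> (insert (topspace (Ztop tau))
       ((\<lambda>(u,us). {z \<in> topspace (Ztop tau). (\<lambda>z. snd z u + us (fst z) - us u) z \<in> {..r}}) ` T))"
      by auto
  next
    fix z assume z: "z \<in> \<Inter> (insert (topspace (Ztop tau))
       ((\<lambda>(u,us). {z \<in> topspace (Ztop tau). (\<lambda>z. snd z u + us (fst z) - us u) z \<in> {..r}}) ` T))"
    then have "z \<in> topspace (Ztop tau)" by auto
    moreover have "fitz T z \<le> ereal r"
    proof (rule fitz_least)
      fix u us assume "(u,us) \<in> T"
      then show "ereal (snd z u + us (fst z) - us u) \<le> ereal r" using z by auto
    qed
    ultimately show "z \<in> {z \<in> topspace (Ztop tau). fitz T z \<le> ereal r}" by auto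
  qed
  show "closedin (Ztop tau) {z \<in> topspace (Ztop tau). fitz T z \<le> ereal r}"
    unfolding eq
  proof (rule closedin_Inter)
    fix K assume "K \<in> insert (topspace (Ztop tau))
       ((\<lambda>(u,us). {z \<in> topspace (Ztop tau). (\<lambda>z. snd z u + us (fst z) - us u) z \<in> {..r}}) ` T)"
    then show "closedin (Ztop tau) K"
    proof
      assume "K = topspace (Ztop tau)" then show ?thesis by simp
    next
      assume "K \<in> (\<lambda>(u,us). {z \<in> topspace (Ztop tau). (\<lambda>z. snd z u + us (fst z) - us u) z \<in> {..r}}) ` T"
      then obtain u us where "(u,us) \<in> T" and K: "K = {z \<in> topspace (Ztop tau). (\<lambda>z. snd z u + us (fst z) - us u) z \<in> {..r}}"
        by auto
      then have "us \<in> dual_space tau" using T by auto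
      then show ?thesis unfolding K
        by (rule closedin_continuous_map_preimage[OF cont_affine]) auto
    qed
  qed auto
qed


lemma maxmono_exists:
  assumes "S \<subseteq> Zset tau" "monotone_op S"
  shows "\<exists>M. S \<subseteq> M \<and> M \<subseteq> Zset tau \<and> monotone_op M \<and>
           (\<forall>z\<in>Zset tau. monotone_op (insert z M) \<longrightarrow> z \<in> M)"
proof -
  let ?A = "{M. S \<subseteq> M \<and> M \<subseteq> Zset tau \<and> monotone_op M}"
  have "\<exists>M\<in>?A. \<forall>X\<in>?A. M \<subseteq> X \<longrightarrow> X = M"
  proof (rule subset_Zorn_nonempty)
    show "?A \<noteq> {}" using assms by blast
  next
    fix C assume ne: "C \<noteq> {}" and ch: "subset.chain ?A C"
    have "monotone_op (\<Union>C)"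
      unfolding monotone_op_def
    proof (intro allI impI)
      fix x f y g assume "(x, f) \<in> \<Union>C \<and> (y, g) \<in> \<Union>C"
      then obtain X Y where X: "X \<in> C" "(x,f) \<in> X" and Y: "Y \<in> C" "(y,g) \<in> Y" by auto
      from ch X(1) Y(1) have "X \<subseteq> Y \<or> Y \<subseteq> X" unfolding subset.chain_def by blast
      then obtain W where "W \<in> C" "(x,f) \<in> W" "(y,g) \<in> W" using X Y by auto
      moreover have "monotone_op W" using ch \<open>W \<in> C\<close> by (auto simp: subset.chain_def)
      ultimately show "f x - f y - g x + g y \<ge> 0" by (auto simp: monotone_op_def)
    qed
    moreover have "S \<subseteq> \<Union>C"
    proof -
      obtain X where "X \<in> C" using ne by auto
      then have "S \<subseteq> X" using ch by (auto simp: subset.chain_def)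
      then show ?thesis using \<open>X \<in> C\<close> by auto
    qed
    moreover have "\<Union>C \<subseteq> Zset tau" using ch by (auto simp: subset.chain_def)
    ultimately show "\<Union>C \<in> ?A" by blast
  qed
  then obtain M where M: "M \<in> ?A" and mx: "\<forall>X\<in>?A. M \<subseteq> X \<longrightarrow> X = M" by blast
  show ?thesis
  proof (intro exI conjI ballI impI)
    fix z assume "z \<in> Zset tau" "monotone_op (insert z M)"
    then have "insert z M \<in> ?A" using M by auto
    with mx have "insert z M = M" by blast
    then show "z \<in> M" by blast
  qed (use M in auto)
qed

lemma fitz_eq_cpl: "monotone_op M \<Longrightarrow> z \<in> M \<Longrightarrow> fitz M z = cpl z"
proof (rule antisym)
  assume m: "monotone_op M" and z: "z \<in> M"
  obtain x xs where zz: "z = (x, xs)" by (cases z)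
  show "fitz M z \<le> cpl z"
  proof (rule fitz_least)
    fix u us assume "(u,us) \<in> M"
    then have "xs x - xs u - us x + us u \<ge> 0" using m z zz unfolding monotone_op_def by blast
    then show "ereal (snd z u + us (fst z) - us u) \<le> cpl z" by (simp add: zz cpl_def)
  qed
  show "cpl z \<le> fitz M z"
    using fitz_upper[of x xs M z] z zz by (simp add: cpl_def)
qed

lemma fitz_ge_cpl_max:
  assumes m: "monotone_op M" and mx: "\<forall>z\<in>Zset tau. monotone_op (insert z M) \<longrightarrow> z \<in> M"
    and z: "z \<in> Zset tau"
  shows "cpl z \<le> fitz M z"
proof (rule ccontr)
  assume "\<not> cpl z \<le> fitz M z"
  then have lt: "fitz M z < cpl z" by simp
  obtain x xs where zz: "z = (x, xs)" by (cases z)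
  have strict: "xs u + us x - us u < xs x" if "(u,us) \<in> M" for u us
    using le_less_trans[OF fitz_upper[OF that, of z] lt] by (simp add: zz cpl_def)
  have "monotone_op (insert z M)"
    unfolding monotone_op_def
  proof (intro allI impI)
    fix a f b g assume ab: "(a, f) \<in> insert z M \<and> (b, g) \<in> insert z M"
    show "f a - f b - g a + g b \<ge> 0"
    proof (cases "(a,f) = z")
      case True
      show ?thesis
      proof (cases "(b,g) = z")
        case True with \<open>(a,f) = z\<close> have "a = b" "f = g" by auto
        then show ?thesis by simp
      next
        case False
        then have "(b,g) \<in> M" using ab by auto
        from strict[OF this] True zz show ?thesis by auto
      qed
    next
      case False
      then have aM: "(a,f) \<in> M" using ab by auto
      show ?thesis
      proof (cases "(b,g) = z")
        case True
        from strict[OF aM] True zz show ?thesis by auto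
      next
        case False
        then have "(b,g) \<in> M" using ab by auto
        with aM m show ?thesis unfolding monotone_op_def by blast
      qed
    qed
  qed
  with mx z have "z \<in> M" by blast
  then have "fitz M z = cpl z" using fitz_eq_cpl m by blast
  with lt show False by simp
qed

lemma cpl_finite[simp]: "cpl z \<noteq> \<infinity>" "cpl z \<noteq> -\<infinity>"
  by (auto simp: cpl_def)

lemma part1:
  assumes lcs: "lcs tau" and T: "T \<subseteq> UNIV \<times> dual_space tau" and VD: "V \<inter> Domain T \<noteq> {}"
    and M: "M_class (restr T V)" and I: "V_identifies tau V T"
  shows "V_representable tau V T \<and> V_locates tau V T"
proof
  let ?S = "restr T V"
  have SZ: "?S \<subseteq> Zset tau" using T by (auto simp: restr_def Zset_def)
  obtain N where N: "?S \<subseteq> N" "N \<subseteq> Zset tau" "monotone_op N"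
     and mx: "\<forall>z\<in>Zset tau. monotone_op (insert z N) \<longrightarrow> z \<in> N"
    using maxmono_exists[OF SZ] M by (auto simp: M_class_def)
  have NT: "N \<subseteq> UNIV \<times> dual_space tau" using N by (auto simp: Zset_def)
  obtain s0 where s0: "s0 \<in> ?S" using M by (auto simp: M_class_def)
  have hR: "fitz N \<in> R_class tau"
    unfolding R_class_def
  proof (intro CollectI conjI ballI)
    show "proper_Z tau (fitz N)"
      unfolding proper_Z_def
    proof
      show "\<forall>z\<in>Zset tau. - \<infinity> < fitz N z"
      proof
        fix z assume "z \<in> Zset tau"
        then have "cpl z \<le> fitz N z" using fitz_ge_cpl_max[OF N(3) mx] by blast
        then show "- \<infinity> < fitz N z" by (auto simp: cpl_def)
      qed
      show "\<exists>z\<in>Zset tau. fitz N z < \<infinity>"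
      proof -
        have "s0 \<in> N" using s0 N by auto
        then have "fitz N s0 = cpl s0" using fitz_eq_cpl[OF N(3)] by blast
        then show ?thesis using SZ s0 by (intro bexI[of _ s0]) auto
      qed
    qed
    show "convex_Z tau (fitz N)"
      unfolding convex_Z_def using fitz_convex[OF NT] by blast
    show "lsc_Z tau (fitz N)" using fitz_lsc[OF NT] .
    fix z assume "z \<in> Zset tau"
    then show "cpl z \<le> fitz N z" using fitz_ge_cpl_max[OF N(3) mx] by blast
  qed
  have "{z \<in> Zset tau. fitz N z = cpl z} \<inter> (V \<times> UNIV) = restr T V"
  proof (intro equalityI subsetI)
    fix z assume z: "z \<in> {z \<in> Zset tau. fitz N z = cpl z} \<inter> (V \<times> UNIV)"
    then have "fitz ?S z \<le> cpl z" using fitz_mono[OF N(1), of z] by auto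
    with z I have "z \<in> T" unfolding V_identifies_def by auto
    with z show "z \<in> restr T V" by (auto simp: restr_def)
  next
    fix z assume z: "z \<in> restr T V"
    then show "z \<in> {z \<in> Zset tau. fitz N z = cpl z} \<inter> (V \<times> UNIV)"
      using SZ N fitz_eq_cpl[OF N(3)] by (auto simp: restr_def)
  qed
  with hR VD show "V_representable tau V T" unfolding V_representable_def by blast
  show "V_locates tau V T"
    using I unfolding V_locates_def V_identifies_def by force
qed

lemma part2:
  assumes L: "V_locates tau V T"
  shows "V_NI tau V T"
  unfolding V_NI_def
proof (intro ballI impI)
  fix z assume z: "z \<in> Zset tau" "fst z \<in> V"
  show "cpl z \<le> fitz (restr T V) z"
  proof (rule ccontr)
    assume "\<not> ?thesis"
    then have lt: "fitz (restr T V) z < cpl z" by simp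
    then have "fst z \<in> Domain T" using L z unfolding V_locates_def by force
    then obtain us where "(fst z, us) \<in> T" by auto
    then have "(fst z, us) \<in> restr T V" using z by (auto simp: restr_def)
    from fitz_upper[OF this, of z] lt show False by (simp add: cpl_def)
  qed
qed


definition hbgood :: "'v::real_vector set \<Rightarrow> 'v set \<Rightarrow> 'v \<Rightarrow> ('v \<times> real) set \<Rightarrow> bool" where
  "hbgood L K v0 G \<longleftrightarrow> G \<subseteq> L \<times> UNIV
     \<and> (\<forall>x y1 y2. (x,y1) \<in> G \<longrightarrow> (x,y2) \<in> G \<longrightarrow> y1 = y2)
     \<and> (\<forall>x1 y1 x2 y2. (x1,y1) \<in> G \<longrightarrow> (x2,y2) \<in> G \<longrightarrow> (x1 + x2, y1 + y2) \<in> G)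
     \<and> (\<forall>x y c. (x,y) \<in> G \<longrightarrow> (c *\<^sub>R x, c * y) \<in> G)
     \<and> (v0, 1) \<in> G
     \<and> (\<forall>x y. (x,y) \<in> G \<longrightarrow> x \<in> K \<longrightarrow> y \<le> 1)"

lemma hb_ext:
  fixes L :: "'v::real_vector set"
  assumes sub: "\<And>x y. x\<in>L \<Longrightarrow> y\<in>L \<Longrightarrow> x+y \<in> L" "\<And>c x. x\<in>L \<Longrightarrow> c *\<^sub>R x \<in> L"
    and K: "convex K" and ab: "\<And>d. d \<in> L \<Longrightarrow> \<exists>e>0. e *\<^sub>R d \<in> K"
    and G: "hbgood L K v0 G" and w: "w \<in> L" "w \<notin> Domain G"
  shows "\<exists>G'. hbgood L K v0 G' \<and> G \<subseteq> G' \<and> G' \<noteq> G"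
proof -
  have GL: "G \<subseteq> L \<times> UNIV" and fnc: "\<And>x y1 y2. (x,y1) \<in> G \<Longrightarrow> (x,y2) \<in> G \<Longrightarrow> y1 = y2"
    and ad: "\<And>x1 y1 x2 y2. (x1,y1) \<in> G \<Longrightarrow> (x2,y2) \<in> G \<Longrightarrow> (x1 + x2, y1 + y2) \<in> G"
    and sc: "\<And>x y c. (x,y) \<in> G \<Longrightarrow> (c *\<^sub>R x, c * y) \<in> G"
    and v0: "(v0, 1) \<in> G" and KG: "\<And>x y. (x,y) \<in> G \<Longrightarrow> x \<in> K \<Longrightarrow> y \<le> 1"
    using G unfolding hbgood_def by blast+
  have z: "(0, 0) \<in> G" using sc[OF v0, of 0] by simp
  define LB where "LB = {(y - 1) / s | x y s. (x,y) \<in> G \<and> s > 0 \<and> x - s *\<^sub>R w \<in> K}"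
  define UB where "UB = {(1 - y) / t | x y t. (x,y) \<in> G \<and> t > 0 \<and> x + t *\<^sub>R w \<in> K}"
  have LU: "l \<le> u" if lb: "l \<in> LB" and ub: "u \<in> UB" for l u
  proof -
    obtain x1 y1 s where 1: "(x1,y1) \<in> G" "s > 0" "x1 - s *\<^sub>R w \<in> K" "l = (y1 - 1) / s"
      using lb unfolding LB_def by blast
    obtain x2 y2 t where 2: "(x2,y2) \<in> G" "t > 0" "x2 + t *\<^sub>R w \<in> K" "u = (1 - y2) / t"
      using ub unfolding UB_def by blast
    have st: "s + t > 0" using 1 2 by simp
    let ?a = "t / (s + t)" and ?b = "s / (s + t)"
    have ab1: "?a + ?b = 1" using st by (simp add: add_divide_distrib[symmetric] add.commute)
    have "?a *\<^sub>R (x1 - s *\<^sub>R w) + ?b *\<^sub>R (x2 + t *\<^sub>R w) \<in> K"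
      using K 1(3) 2(3) ab1 st 1(2) 2(2) unfolding convex_def by simp
    moreover have "?a *\<^sub>R (x1 - s *\<^sub>R w) + ?b *\<^sub>R (x2 + t *\<^sub>R w) = ?a *\<^sub>R x1 + ?b *\<^sub>R x2"
    proof -
      have "?a *\<^sub>R (s *\<^sub>R w) = ?b *\<^sub>R (t *\<^sub>R w)" by (simp add: field_simps)
      then show ?thesis by (simp add: algebra_simps)
    qed
    ultimately have inK: "?a *\<^sub>R x1 + ?b *\<^sub>R x2 \<in> K" by simp
    have "(?a *\<^sub>R x1 + ?b *\<^sub>R x2, ?a * y1 + ?b * y2) \<in> G"
      by (intro ad sc 1(1) 2(1))
    from KG[OF this inK] have "?a * y1 + ?b * y2 \<le> 1" .
    moreover have "?a * y1 + ?b * y2 = (t * y1 + s * y2) / (s + t)" by (simp add: add_divide_distrib)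
    ultimately have "t * y1 + s * y2 \<le> s + t" using st by (simp add: pos_divide_le_eq)
    then have "t * (y1 - 1) \<le> s * (1 - y2)" by (simp add: algebra_simps)
    moreover have "y1 - 1 = l * s" using 1(2,4) by simp
    moreover have "1 - y2 = u * t" using 2(2,4) by simp
    ultimately have "t * (l * s) \<le> s * (u * t)" by metis
    then have "(s * t) * l \<le> (s * t) * u" by (simp add: mult.commute mult.left_commute)
    moreover have "s * t > 0" using 1(2) 2(2) by simp
    ultimately show "l \<le> u" by (simp add: mult_le_cancel_left_pos)
  qed
  obtain e1 where e1: "e1 > 0" "e1 *\<^sub>R (- w) \<in> K" using ab[of "- w"] sub(2)[OF w(1), of "-1"] by auto
  obtain e2 where e2: "e2 > 0" "e2 *\<^sub>R w \<in> K" using ab[OF w(1)] by auto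
  have LBne: "(0 - 1) / e1 \<in> LB" unfolding LB_def using z e1 by force
  have UBne: "(1 - 0) / e2 \<in> UB" unfolding UB_def using z e2 by force
  define \<alpha> where "\<alpha> = Sup LB"
  have bdd: "bdd_above LB" using LU UBne by (auto simp: bdd_above_def)
  have lo: "l \<le> \<alpha>" if "l \<in> LB" for l using cSup_upper[OF that bdd] \<alpha>_def by simp
  have hi: "\<alpha> \<le> u" if "u \<in> UB" for u unfolding \<alpha>_def
    using LBne LU that by (intro cSup_least) auto
  define G' where "G' = {(x + t *\<^sub>R w, y + t * \<alpha>) | x y t. (x,y) \<in> G}"
  have domw: False if "(x,y) \<in> G" "(x2, y2) \<in> G" "x + t *\<^sub>R w = x2 + t2 *\<^sub>R w" "t \<noteq> t2" for x y x2 y2 t t2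
  proof -
    have "(x2 + (-1) *\<^sub>R x, y2 + (-1) * y) \<in> G" by (intro ad sc that)
    then have "((1 / (t - t2)) *\<^sub>R (x2 + (-1) *\<^sub>R x), (1 / (t - t2)) * (y2 + (-1) * y)) \<in> G" by (rule sc)
    moreover have "(1 / (t - t2)) *\<^sub>R (x2 + (-1) *\<^sub>R x) = w"
    proof -
      have "x2 - x = (t - t2) *\<^sub>R w" using that(3) by (simp add: algebra_simps)
      then show ?thesis using that(4) by simp
    qed
    ultimately have "w \<in> Domain G" by (metis Domain.intros)
    with w show False by simp
  qed
  have good: "hbgood L K v0 G'"
    unfolding hbgood_def
  proof (intro conjI allI impI)
    show "G' \<subseteq> L \<times> UNIV"
    proof
      fix p assume "p \<in> G'"
      then obtain x y t where "(x,y) \<in> G" "p = (x + t *\<^sub>R w, y + t * \<alpha>)" unfolding G'_def by blast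
      moreover have "x \<in> L" using GL \<open>(x,y) \<in> G\<close> by blast
      ultimately show "p \<in> L \<times> UNIV" using w sub by auto
    qed
  next
    fix x y1 y2 assume a: "(x, y1) \<in> G'" "(x, y2) \<in> G'"
    then obtain xa ya ta xb yb tb where A: "(xa,ya) \<in> G" "x = xa + ta *\<^sub>R w" "y1 = ya + ta * \<alpha>"
      and B: "(xb,yb) \<in> G" "x = xb + tb *\<^sub>R w" "y2 = yb + tb * \<alpha>"
      unfolding G'_def by blast
    have "ta = tb" using domw[OF A(1) B(1)] A(2) B(2) by blast
    then have "xa = xb" using A(2) B(2) by simp
    then have "ya = yb" using fnc A(1) B(1) by blast
    then show "y1 = y2" using A B \<open>ta = tb\<close> by simp
  next
    fix x1 y1 x2 y2 assume a: "(x1, y1) \<in> G'" "(x2, y2) \<in> G'"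
    then obtain xa ya ta xb yb tb where A: "(xa,ya) \<in> G" "x1 = xa + ta *\<^sub>R w" "y1 = ya + ta * \<alpha>"
      and B: "(xb,yb) \<in> G" "x2 = xb + tb *\<^sub>R w" "y2 = yb + tb * \<alpha>"
      unfolding G'_def by blast
    have "(xa + xb, ya + yb) \<in> G" by (rule ad[OF A(1) B(1)])
    moreover have "x1 + x2 = (xa + xb) + (ta + tb) *\<^sub>R w" "y1 + y2 = (ya + yb) + (ta + tb) * \<alpha>"
      using A B by (simp_all add: algebra_simps)
    ultimately show "(x1 + x2, y1 + y2) \<in> G'" unfolding G'_def by blast
  next
    fix x y c assume "(x, y) \<in> G'"
    then obtain xa ya ta where A: "(xa,ya) \<in> G" "x = xa + ta *\<^sub>R w" "y = ya + ta * \<alpha>"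
      unfolding G'_def by blast
    have "(c *\<^sub>R xa, c * ya) \<in> G" by (rule sc[OF A(1)])
    moreover have "c *\<^sub>R x = c *\<^sub>R xa + (c * ta) *\<^sub>R w" "c * y = c * ya + (c * ta) * \<alpha>"
      using A by (simp_all add: algebra_simps)
    ultimately show "(c *\<^sub>R x, c * y) \<in> G'" unfolding G'_def by blast
  next
    show "(v0, 1) \<in> G'" unfolding G'_def using v0 by force
  next
    fix x y assume a: "(x, y) \<in> G'" "x \<in> K"
    then obtain xa ya t where A: "(xa,ya) \<in> G" "x = xa + t *\<^sub>R w" "y = ya + t * \<alpha>"
      unfolding G'_def by blast
    consider "t = 0" | "t > 0" | "t < 0" by linarith
    then show "y \<le> 1"
    proof cases
      case 1 then show ?thesis using KG[OF A(1)] A a(2) by simp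
    next
      case 2
      then have "(1 - ya) / t \<in> UB" unfolding UB_def using A a(2) by blast
      then have "\<alpha> \<le> (1 - ya) / t" by (rule hi)
      then have "t * \<alpha> \<le> 1 - ya" using 2 by (simp add: field_simps)
      then show ?thesis using A by simp
    next
      case 3
      have "xa - (- t) *\<^sub>R w \<in> K" using A a(2) by simp
      moreover have "0 < - t" using 3 by simp
      ultimately have "(ya - 1) / (- t) \<in> LB" unfolding LB_def using A(1) by blast
      then have "(ya - 1) / (- t) \<le> \<alpha>" by (rule lo)
      then have "ya - 1 \<le> - t * \<alpha>" using 3 by (simp add: field_simps)
      then show ?thesis using A by simp
    qed
  qed
  have sub1: "G \<subseteq> G'" unfolding G'_def by force
  have "(w, \<alpha>) \<in> G'" unfolding G'_def using z by force
  then have "G' \<noteq> G" using w(2) by auto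
  with good sub1 show ?thesis by blast
qed


lemma hbg_sub: "hbgood L K v0 G \<Longrightarrow> G \<subseteq> L \<times> UNIV" by (simp add: hbgood_def)
lemma hbg_fun: "hbgood L K v0 G \<Longrightarrow> (x,y1) \<in> G \<Longrightarrow> (x,y2) \<in> G \<Longrightarrow> y1 = y2" by (simp add: hbgood_def)
lemma hbg_add: "hbgood L K v0 G \<Longrightarrow> (x1,y1) \<in> G \<Longrightarrow> (x2,y2) \<in> G \<Longrightarrow> (x1 + x2, y1 + y2) \<in> G" by (simp add: hbgood_def)
lemma hbg_sc: "hbgood L K v0 G \<Longrightarrow> (x,y) \<in> G \<Longrightarrow> (c *\<^sub>R x, c * y) \<in> G" by (simp add: hbgood_def)
lemma hbg_v0: "hbgood L K v0 G \<Longrightarrow> (v0, 1) \<in> G" by (simp add: hbgood_def)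
lemma hbg_K: "hbgood L K v0 G \<Longrightarrow> (x,y) \<in> G \<Longrightarrow> x \<in> K \<Longrightarrow> y \<le> 1" by (simp add: hbgood_def)

lemma hb_sep:
  fixes L :: "'v::real_vector set"
  assumes sub: "\<And>x y. x\<in>L \<Longrightarrow> y\<in>L \<Longrightarrow> x+y \<in> L" "\<And>c x. x\<in>L \<Longrightarrow> c *\<^sub>R x \<in> L"
    and K: "convex K" "0 \<in> K" and ab: "\<And>d. d \<in> L \<Longrightarrow> \<exists>e>0. e *\<^sub>R d \<in> K"
    and v0: "v0 \<in> L" "v0 \<notin> K"
  shows "\<exists>F. (\<forall>x\<in>L. \<forall>y\<in>L. F (x+y) = F x + F y) \<and> (\<forall>x\<in>L. \<forall>c. F (c *\<^sub>R x) = c * F x)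
           \<and> F v0 = 1 \<and> (\<forall>k\<in>K\<inter>L. F k \<le> 1)"
proof -
  let ?A = "{G. hbgood L K v0 G}"
  define G0 where "G0 = {(c *\<^sub>R v0, c) | c. True}"
  have v0nz: "v0 \<noteq> 0" using v0 K by auto
  have G0: "hbgood L K v0 G0"
    unfolding hbgood_def G0_def
  proof (intro conjI allI impI)
    fix x y assume "(x, y) \<in> {(c *\<^sub>R v0, c) |c. True}" "x \<in> K"
    then have x: "x = y *\<^sub>R v0" "x \<in> K" by auto
    show "y \<le> 1"
    proof (rule ccontr)
      assume "\<not> y \<le> 1"
      then have y: "y > 1" by simp
      have "(1/y) *\<^sub>R x + (1 - 1/y) *\<^sub>R 0 \<in> K"
        using y by (intro convexD[OF K(1) x(2) K(2)]) auto
      moreover have "(1/y) *\<^sub>R x + (1 - 1/y) *\<^sub>R 0 = v0" using x y by simp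
      ultimately show False using v0 by simp
    qed
  next
    fix x y1 y2 assume "(x, y1) \<in> {(c *\<^sub>R v0, c) |c. True}" "(x, y2) \<in> {(c *\<^sub>R v0, c) |c. True}"
    then have "y1 *\<^sub>R v0 = y2 *\<^sub>R v0" by auto
    then show "y1 = y2" using v0nz by (simp add: scaleR_cancel_right)
  next
    fix x1 y1 x2 y2 assume "(x1, y1) \<in> {(c *\<^sub>R v0, c) |c. True}" "(x2, y2) \<in> {(c *\<^sub>R v0, c) |c. True}"
    then show "(x1 + x2, y1 + y2) \<in> {(c *\<^sub>R v0, c) |c. True}" by (auto simp: scaleR_add_left)
  next
    fix x y c assume "(x, y) \<in> {(c *\<^sub>R v0, c) |c. True}"
    then show "(c *\<^sub>R x, c * y) \<in> {(c *\<^sub>R v0, c) |c. True}" by auto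
  qed (use v0 sub in auto)
  have "\<exists>M\<in>?A. \<forall>X\<in>?A. M \<subseteq> X \<longrightarrow> X = M"
  proof (rule subset_Zorn_nonempty)
    show "?A \<noteq> {}" using G0 by blast
  next
    fix C assume ne: "C \<noteq> {}" and ch: "subset.chain ?A C"
    have good: "\<And>G. G \<in> C \<Longrightarrow> hbgood L K v0 G" using ch by (auto simp: subset.chain_def)
    have cmp: "\<And>X Y. X \<in> C \<Longrightarrow> Y \<in> C \<Longrightarrow> X \<subseteq> Y \<or> Y \<subseteq> X"
      using ch unfolding subset.chain_def by blast
    have two: "\<exists>W\<in>C. p \<in> W \<and> q \<in> W" if pq: "p \<in> \<Union>C" "q \<in> \<Union>C" for p q
    proof -
      obtain X Y where "X \<in> C" "p \<in> X" "Y \<in> C" "q \<in> Y" using pq by auto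
      then show ?thesis using cmp[of X Y] by auto
    qed
    show "\<Union>C \<in> ?A"
      unfolding mem_Collect_eq hbgood_def
    proof (intro conjI allI impI)
      show "\<Union>C \<subseteq> L \<times> UNIV" using good hbg_sub by blast
    next
      fix x y1 y2 assume "(x, y1) \<in> \<Union>C" "(x, y2) \<in> \<Union>C"
      then obtain W where "W \<in> C" "(x,y1) \<in> W" "(x,y2) \<in> W" using two by blast
      then show "y1 = y2" using hbg_fun[OF good[of W]] by blast
    next
      fix x1 y1 x2 y2 assume "(x1, y1) \<in> \<Union>C" "(x2, y2) \<in> \<Union>C"
      then obtain W where "W \<in> C" "(x1,y1) \<in> W" "(x2,y2) \<in> W" using two by blast
      then show "(x1 + x2, y1 + y2) \<in> \<Union>C" using hbg_add[OF good[of W]] by blast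
    next
      fix x y c assume "(x, y) \<in> \<Union>C"
      then obtain W where "W \<in> C" "(x,y) \<in> W" by blast
      then show "(c *\<^sub>R x, c * y) \<in> \<Union>C" using hbg_sc[OF good[of W]] by blast
    next
      obtain W where "W \<in> C" using ne by blast
      then show "(v0, 1) \<in> \<Union>C" using hbg_v0[OF good[of W]] by blast
    next
      fix x y assume "(x, y) \<in> \<Union>C" "x \<in> K"
      then obtain W where "W \<in> C" "(x,y) \<in> W" by blast
      then show "y \<le> 1" using hbg_K[OF good[of W]] \<open>x \<in> K\<close> by blast
    qed
  qed
  then obtain G where G: "hbgood L K v0 G" and mx: "\<forall>X\<in>?A. G \<subseteq> X \<longrightarrow> X = G" by blast
  have dom: "Domain G = L"
  proof
    have "G \<subseteq> L \<times> UNIV" using hbg_sub[OF G] .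
    then show "Domain G \<subseteq> L" by auto
    show "L \<subseteq> Domain G"
    proof
      fix w assume "w \<in> L"
      show "w \<in> Domain G"
      proof (rule ccontr)
        assume "w \<notin> Domain G"
        from hb_ext[OF sub K(1) ab G \<open>w \<in> L\<close> this] mx show False by blast
      qed
    qed
  qed
  have fnc: "\<And>x y1 y2. (x,y1) \<in> G \<Longrightarrow> (x,y2) \<in> G \<Longrightarrow> y1 = y2"
    using hbg_fun[OF G] by blast
  have ad: "\<And>x1 y1 x2 y2. (x1,y1) \<in> G \<Longrightarrow> (x2,y2) \<in> G \<Longrightarrow> (x1 + x2, y1 + y2) \<in> G"
    using hbg_add[OF G] by blast
  have sc: "\<And>x y c. (x,y) \<in> G \<Longrightarrow> (c *\<^sub>R x, c * y) \<in> G"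
    using hbg_sc[OF G] by blast
  have vv: "(v0, 1) \<in> G" using hbg_v0[OF G] by blast
  have KG: "\<And>x y. (x,y) \<in> G \<Longrightarrow> x \<in> K \<Longrightarrow> y \<le> 1"
    using hbg_K[OF G] by blast
  define F where "F x = (THE y. (x,y) \<in> G)" for x
  have FG: "(x, F x) \<in> G" if xL: "x \<in> L" for x
  proof -
    obtain y where y: "(x,y) \<in> G" using dom xL by blast
    have "F x = y" unfolding F_def using fnc y by blast
    with y show ?thesis by simp
  qed
  have Fu: "F x = y" if xy: "(x,y) \<in> G" for x y
    unfolding F_def using fnc xy by blast
  show ?thesis
  proof (intro exI conjI ballI allI)
    fix x y assume "x \<in> L" "y \<in> L"
    show "F (x + y) = F x + F y" using Fu[OF ad[OF FG[OF \<open>x \<in> L\<close>] FG[OF \<open>y \<in> L\<close>]]] .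
  next
    fix x c assume "x \<in> L"
    show "F (c *\<^sub>R x) = c * F x" using Fu[OF sc[OF FG[OF \<open>x \<in> L\<close>]]] .
  next
    show "F v0 = 1" using Fu[OF vv] .
  next
    fix k assume "k \<in> K \<inter> L"
    then show "F k \<le> 1" using KG[OF FG] by blast
  qed
qed


lemma lcs_top: "lcs tau \<Longrightarrow> topspace tau = UNIV" by (simp add: lcs_def)

lemma trans_cont:
  assumes "lcs tau" shows "continuous_map tau tau (\<lambda>x. x + v)"
proof -
  have a: "continuous_map (prod_topology tau tau) tau (\<lambda>(x, y). x + y)" using assms by (simp add: lcs_def)
  have "continuous_map tau (prod_topology tau tau) (\<lambda>x. (x, v))"
    using assms by (intro continuous_map_pairedI) (auto simp: lcs_def)
  from continuous_map_compose[OF this a] show ?thesis by (simp add: o_def)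
qed

lemma scale_cont:
  assumes "lcs tau" shows "continuous_map tau tau (\<lambda>x. c *\<^sub>R x)"
proof -
  have a: "continuous_map (prod_topology euclideanreal tau) tau (\<lambda>(a, x). a *\<^sub>R x)" using assms by (simp add: lcs_def)
  have "continuous_map tau (prod_topology euclideanreal tau) (\<lambda>x. (c, x))"
    by (intro continuous_map_pairedI) auto
  from continuous_map_compose[OF this a] show ?thesis by (simp add: o_def)
qed

lemma ray_cont:
  assumes "lcs tau" shows "continuous_map euclideanreal tau (\<lambda>t. t *\<^sub>R d)"
proof -
  have a: "continuous_map (prod_topology euclideanreal tau) tau (\<lambda>(a, x). a *\<^sub>R x)" using assms by (simp add: lcs_def)
  have "continuous_map euclideanreal (prod_topology euclideanreal tau) (\<lambda>t. (t, d))"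
    using assms by (intro continuous_map_pairedI) (auto simp: lcs_def)
  from continuous_map_compose[OF this a] show ?thesis by (simp add: o_def)
qed

lemma affine_open:
  assumes "lcs tau" "openin tau C" "c \<noteq> 0"
  shows "openin tau {x. c *\<^sub>R (x - v) \<in> C}"
proof -
  have "continuous_map tau tau (\<lambda>x. c *\<^sub>R (x + (- v)))"
    using continuous_map_compose[OF trans_cont[OF assms(1), of "-v"] scale_cont[OF assms(1), of c]]
    by (simp add: o_def)
  from openin_continuous_map_preimage[OF this assms(2)] show ?thesis
    using lcs_top[OF assms(1)] by simp
qed

lemma absorb:
  assumes "lcs tau" "openin tau C" "0 \<in> C"
  shows "\<exists>e>0. \<forall>t. \<bar>t\<bar> < e \<longrightarrow> t *\<^sub>R d \<in> C"
proof -
  have "openin euclideanreal {t \<in> topspace euclideanreal. t *\<^sub>R d \<in> C}"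
    by (rule openin_continuous_map_preimage[OF ray_cont[OF assms(1)] assms(2)])
  then have "open {t. t *\<^sub>R d \<in> C}" by simp
  moreover have "0 \<in> {t. t *\<^sub>R d \<in> C}" using assms by simp
  ultimately obtain e where "e > 0" "ball 0 e \<subseteq> {t. t *\<^sub>R d \<in> C}"
    using open_contains_ball by blast
  then show ?thesis by (intro exI[of _ e]) (auto simp: dist_real_def)
qed

lemma lin_cont:
  assumes lcs: "lcs tau" and f: "linear f" and C: "openin tau C" "0 \<in> C" and M: "\<And>c. c \<in> C \<Longrightarrow> f c \<le> M"
  shows "continuous_map tau euclideanreal f"
proof -
  define M' where "M' = max M 0 + 1"
  have M'pos: "M' > 0" and MM: "M \<le> M'" unfolding M'_def by auto
  have fx: "f (x1 + t *\<^sub>R c) = f x1 + t * f c" for x1 t c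
    by (simp add: linear_add[OF f] linear_scale[OF f])
  have top: "topspace tau = UNIV" using lcs_top[OF lcs] .
  have lt: "openin tau {x \<in> topspace tau. f x < a}" for a
  proof (subst openin_subopen, intro ballI)
    fix x1 assume "x1 \<in> {x \<in> topspace tau. f x < a}"
    then have x1: "f x1 < a" by simp
    define t where "t = (a - f x1) / M'"
    have t: "t > 0" using x1 M'pos by (simp add: t_def)
    let ?T = "{x. (1/t) *\<^sub>R (x - x1) \<in> C}"
    have "openin tau ?T" using affine_open[OF lcs C(1)] t by simp
    moreover have "x1 \<in> ?T" using C by simp
    moreover have "?T \<subseteq> {x \<in> topspace tau. f x < a}"
    proof
      fix x assume "x \<in> ?T"
      then have c: "(1/t) *\<^sub>R (x - x1) \<in> C" by simp
      have xe: "x = x1 + t *\<^sub>R ((1/t) *\<^sub>R (x - x1))" using t by simp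
      have "f x = f x1 + t * f ((1/t) *\<^sub>R (x - x1))" by (subst xe, rule fx)
      also have "\<dots> \<le> f x1 + t * M" using M[OF c] t by (simp add: mult_left_mono)
      also have "\<dots> \<le> f x1 + t * M'" using MM t by (simp add: mult_left_mono)
      also have "\<dots> = a" using M'pos by (simp add: t_def)
      finally have "f x \<le> a" .
      moreover have "f x \<noteq> a"
      proof
        assume "f x = a"
        then have "f x1 + t * f ((1/t) *\<^sub>R (x - x1)) = f x1 + t * M'"
          using \<open>f x = f x1 + t * f ((1/t) *\<^sub>R (x - x1))\<close> M'pos by (simp add: t_def)
        then have "f ((1/t) *\<^sub>R (x - x1)) = M'" using t by simp
        with M[OF c] M'_def show False by simp
      qed
      ultimately show "x \<in> {x \<in> topspace tau. f x < a}" using top by simp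
    qed
    ultimately show "\<exists>T. openin tau T \<and> x1 \<in> T \<and> T \<subseteq> {x \<in> topspace tau. f x < a}" by blast
  qed
  have gt: "openin tau {x \<in> topspace tau. f x > a}" for a
  proof (subst openin_subopen, intro ballI)
    fix x1 assume "x1 \<in> {x \<in> topspace tau. f x > a}"
    then have x1: "f x1 > a" by simp
    define t where "t = (f x1 - a) / M'"
    have t: "t > 0" using x1 M'pos by (simp add: t_def)
    let ?T = "{x. (-1/t) *\<^sub>R (x - x1) \<in> C}"
    have "openin tau ?T" using affine_open[OF lcs C(1), of "-1/t" x1] t by simp
    moreover have "x1 \<in> ?T" using C by simp
    moreover have "?T \<subseteq> {x \<in> topspace tau. f x > a}"
    proof
      fix x assume "x \<in> ?T"
      then have c: "(-1/t) *\<^sub>R (x - x1) \<in> C" by simp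
      have xe: "x = x1 + (-t) *\<^sub>R ((-1/t) *\<^sub>R (x - x1))" using t by simp
      have fe: "f x = f x1 + (-t) * f ((-1/t) *\<^sub>R (x - x1))" by (subst xe, rule fx)
      have "t * f ((-1/t) *\<^sub>R (x - x1)) \<le> t * M" using M[OF c] t by (simp add: mult_left_mono)
      also have "\<dots> < t * M'" using MM t M'_def by simp
      also have "\<dots> = f x1 - a" using M'pos by (simp add: t_def)
      finally have "f x > a" using fe by simp
      then show "x \<in> {x \<in> topspace tau. f x > a}" using top by simp
    qed
    ultimately show "\<exists>T. openin tau T \<and> x1 \<in> T \<and> T \<subseteq> {x \<in> topspace tau. f x > a}" by blast
  qed
  show ?thesis using lt gt by (simp add: continuous_map_upper_lower_semicontinuous_lt)
qed

lemma fin_rep: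
  fixes g :: "('a::real_vector \<Rightarrow> real) \<Rightarrow> real"
  assumes "finite F0"
  shows "(\<And>q q'. q \<in> D \<Longrightarrow> q' \<in> D \<Longrightarrow> q + q' \<in> D) \<Longrightarrow> (\<And>c q. q \<in> D \<Longrightarrow> c *\<^sub>R q \<in> D)
    \<Longrightarrow> (\<And>q. q \<in> D \<Longrightarrow> linear q)
    \<Longrightarrow> (\<And>q q'. q \<in> D \<Longrightarrow> q' \<in> D \<Longrightarrow> g (q + q') = g q + g q')
    \<Longrightarrow> (\<And>c q. q \<in> D \<Longrightarrow> g (c *\<^sub>R q) = c * g q)
    \<Longrightarrow> (\<And>q. q \<in> D \<Longrightarrow> (\<forall>y\<in>F0. q y = 0) \<Longrightarrow> g q = 0)
    \<Longrightarrow> \<exists>y. \<forall>q\<in>D. g q = q y"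
  using assms
proof (induction F0 arbitrary: D rule: finite_induct)
  case empty
  then show ?case by (intro exI[of _ 0]) (auto simp: linear_0)
next
  case (insert y1 F D)
  let ?D' = "{q \<in> D. q y1 = 0}"
  have "\<exists>y. \<forall>q\<in>?D'. g q = q y"
  proof (rule insert.IH)
    show "q + q' \<in> ?D'" if qq: "q \<in> ?D'" "q' \<in> ?D'" for q q'
    proof -
      have "q + q' \<in> D" using insert.prems(1) qq by blast
      moreover have "(q + q') y1 = 0" using qq by simp
      ultimately show ?thesis by blast
    qed
    show "c *\<^sub>R q \<in> ?D'" if qq: "q \<in> ?D'" for c q
    proof -
      have "c *\<^sub>R q \<in> D" using insert.prems(2) qq by blast
      moreover have "(c *\<^sub>R q) y1 = 0" using qq by simp
      ultimately show ?thesis by blast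
    qed
    show "\<And>q. q \<in> ?D' \<Longrightarrow> linear q" using insert.prems(3) by blast
    show "\<And>q q'. q \<in> ?D' \<Longrightarrow> q' \<in> ?D' \<Longrightarrow> g (q + q') = g q + g q'" using insert.prems(4) by blast
    show "\<And>c q. q \<in> ?D' \<Longrightarrow> g (c *\<^sub>R q) = c * g q" using insert.prems(5) by blast
    show "\<And>q. q \<in> ?D' \<Longrightarrow> \<forall>y\<in>F. q y = 0 \<Longrightarrow> g q = 0" using insert.prems(6) by auto
  qed
  then obtain y' where y': "\<And>q. q \<in> D \<Longrightarrow> q y1 = 0 \<Longrightarrow> g q = q y'" by blast
  show ?case
  proof (cases "\<exists>q1\<in>D. q1 y1 \<noteq> 0")
    case False
    then show ?thesis using y' by blast
  next
    case True
    then obtain q0 where q0: "q0 \<in> D" "q0 y1 \<noteq> 0" by blast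
    define q1 where "q1 = (1 / q0 y1) *\<^sub>R q0"
    have q1D: "q1 \<in> D" unfolding q1_def by (rule insert.prems(2)[OF q0(1)])
    have q1: "q1 \<in> D" "q1 y1 = 1" using q1D q0(2) by (auto simp: q1_def)
    define c where "c = g q1 - q1 y'"
    show ?thesis
    proof (intro exI[of _ "y' + c *\<^sub>R y1"] ballI)
      fix q assume q: "q \<in> D"
      define r where "r = q + (- q y1) *\<^sub>R q1"
      have rD: "r \<in> D" unfolding r_def by (rule insert.prems(1)[OF q insert.prems(2)[OF q1(1)]])
      have r: "r \<in> D" "r y1 = 0" using rD q1 by (auto simp: r_def)
      have gr: "g r = r y'" using y' r by blast
      have e1: "g (q + (- q y1) *\<^sub>R q1) = g q + g ((- q y1) *\<^sub>R q1)"
        by (rule insert.prems(4)[OF q insert.prems(2)[OF q1(1)]])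
      have e2: "g ((- q y1) *\<^sub>R q1) = (- q y1) * g q1" by (rule insert.prems(5)[OF q1(1)])
      moreover have "g r = g q - q y1 * g q1"
        unfolding r_def e1 e2 by simp
      moreover have "r y' = q y' - q y1 * q1 y'" by (simp add: r_def)
      ultimately have "g q = q y' + q y1 * c" using gr by (simp add: c_def algebra_simps)
      also have "\<dots> = q (y' + c *\<^sub>R y1)"
        using insert.prems(3)[OF q] by (simp add: linear_add linear_scale)
      finally show "g q = q (y' + c *\<^sub>R y1)" .
    qed
  qed
qed

lemma small_le:
  fixes a b k e :: real
  assumes "e > 0" "\<And>t. 0 < t \<Longrightarrow> t \<le> e \<Longrightarrow> a \<le> b + t * k"
  shows "a \<le> b"
proof (rule ccontr)
  assume "\<not> a \<le> b"
  then have q: "a - b > 0" by simp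
  define t where "t = min e ((a - b) / (2 * (\<bar>k\<bar> + 1)))"
  have t: "0 < t" "t \<le> e" using assms(1) q by (auto simp: t_def)
  have "t \<le> (a - b) / (2 * (\<bar>k\<bar> + 1))" by (simp add: t_def)
  then have "t * (2 * (\<bar>k\<bar> + 1)) \<le> a - b"
    by (simp add: le_divide_eq add_pos_nonneg)
  then have "2 * (t * \<bar>k\<bar>) + 2 * t \<le> a - b" by (simp add: algebra_simps)
  moreover have "t * k \<le> t * \<bar>k\<bar>" using t by (simp add: mult_left_mono)
  ultimately have "t * k < a - b" using t q by linarith
  with assms(2)[OF t] show False by simp
qed


lemma finite_delta:
  fixes P :: "'b \<Rightarrow> real \<Rightarrow> bool"
  assumes "finite F" "\<forall>y\<in>F. \<exists>d>0. P y d" "\<And>y d d'. P y d \<Longrightarrow> 0 < d' \<Longrightarrow> d' \<le> d \<Longrightarrow> P y d'"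
  shows "\<exists>\<delta>>0. \<forall>y\<in>F. P y \<delta>"
  using assms(1,2)
proof (induction F rule: finite_induct)
  case empty then show ?case by (intro exI[of _ 1]) auto
next
  case (insert y F)
  then obtain \<delta> where d: "\<delta> > 0" "\<forall>y\<in>F. P y \<delta>" by auto
  obtain d where d': "d > 0" "P y d" using insert.prems by auto
  show ?case
    by (intro exI[of _ "min \<delta> d"]) (use d d' assms(3) in auto)
qed

lemma zero_dual: "(\<lambda>_. 0) \<in> dual_space tau"
  by (simp add: dual_space_def linear_zero)

lemma dual_add: "f \<in> dual_space tau \<Longrightarrow> g \<in> dual_space tau \<Longrightarrow> f + g \<in> dual_space tau"
proof -
  assume "f \<in> dual_space tau" "g \<in> dual_space tau"
  from dual_comb[OF this, of 1 1] show ?thesis by (simp add: plus_fun_def)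
qed

lemma dual_scale: "f \<in> dual_space tau \<Longrightarrow> c *\<^sub>R f \<in> dual_space tau"
proof -
  assume "f \<in> dual_space tau"
  from dual_comb[OF this this, of c 0] show ?thesis by (simp add: scaleR_fun_def)
qed

lemma dual_scale': "f \<in> dual_space tau \<Longrightarrow> (\<lambda>u. c * f u) \<in> dual_space tau"
proof -
  assume "f \<in> dual_space tau"
  from dual_comb[OF this this, of c 0] show ?thesis by simp
qed

lemma key_sep:
  fixes tau :: "'a::real_vector topology" and h :: "'a \<times> ('a \<Rightarrow> real) \<Rightarrow> ereal"
  assumes lcs: "lcs tau" and cvx: "convex_Z tau h" and lsc: "lsc_Z tau h"
    and ps: "ps \<in> dual_space tau"
    and minor: "\<And>w. w \<in> Zset tau \<Longrightarrow> ereal (\<beta> + ps (fst w) + snd w p) \<le> h w"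
    and dom: "za \<in> Zset tau" "h za < \<infinity>"
    and z0: "(x0, xs0) \<in> Zset tau" "ereal r < h (x0, xs0)"
  shows "\<exists>\<alpha> y ys. ys \<in> dual_space tau \<and> (\<forall>w\<in>Zset tau. ereal (\<alpha> + ys (fst w) + snd w y) \<le> h w)
            \<and> r \<le> \<alpha> + ys x0 + xs0 y"
proof -
  have top: "topspace (Ztop tau) = Zset tau" using topspace_Ztop[OF lcs] .
  have xs0d: "xs0 \<in> dual_space tau" using z0 by (simp add: Zset_def)
  define Op where "Op = topspace (Ztop tau) - {z \<in> topspace (Ztop tau). h z \<le> ereal r}"
  have op: "openin (Ztop tau) Op"
    unfolding Op_def using lsc unfolding lsc_Z_def by (intro openin_diff) auto
  have mem: "(x0, xs0) \<in> Op" using z0 top by (auto simp: Op_def)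
  have op2: "\<forall>x y. (x, y) \<in> Op \<longrightarrow> (\<exists>U V. openin tau U \<and> openin (weak_star tau) V \<and> x \<in> U \<and> y \<in> V \<and> U \<times> V \<subseteq> Op)"
    using op unfolding Ztop_def openin_prod_topology_alt .
  have "\<exists>U W. openin tau U \<and> openin (weak_star tau) W \<and> x0 \<in> U \<and> xs0 \<in> W \<and> U \<times> W \<subseteq> Op"
    using op2 mem by blast
  then obtain U W where UW: "openin tau U" "openin (weak_star tau) W" "x0 \<in> U" "xs0 \<in> W" "U \<times> W \<subseteq> Op"
    by auto
  have hgt: "ereal r < h (x, g)" if xg: "x \<in> U" "g \<in> W" for x g
  proof -
    have "(x, g) \<in> Op" using UW(5) xg by blast
    then show ?thesis by (simp add: Op_def not_le)
  qed
  have "\<exists>Wp. openin (product_topology (\<lambda>_. euclideanreal) UNIV) Wp \<and> W = Wp \<inter> dual_space tau"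
    using UW(2) unfolding weak_star_def openin_subtopology .
  then obtain Wp where Wp: "openin (product_topology (\<lambda>_. euclideanreal) UNIV) Wp" "W = Wp \<inter> dual_space tau"
    by auto
  then have xsWp: "xs0 \<in> Wp" using UW(4) by blast
  have allWp: "\<forall>x \<in> Wp. \<exists>U. finite {i \<in> UNIV. U i \<noteq> topspace euclideanreal} \<and>
                 (\<forall>i \<in> UNIV. openin euclideanreal (U i)) \<and> x \<in> Pi\<^sub>E UNIV U \<and> Pi\<^sub>E UNIV U \<subseteq> Wp"
    using Wp(1) unfolding openin_product_topology_alt .
  have "\<exists>U. finite {i \<in> UNIV. U i \<noteq> topspace euclideanreal} \<and>
                 (\<forall>i \<in> UNIV. openin euclideanreal (U i)) \<and> xs0 \<in> Pi\<^sub>E UNIV U \<and> Pi\<^sub>E UNIV U \<subseteq> Wp"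
    using allWp xsWp by (rule bspec)
  then obtain Ub where Ub: "finite {i \<in> UNIV. Ub i \<noteq> topspace euclideanreal}" "\<forall>i\<in>UNIV. openin euclideanreal (Ub i)"
      "xs0 \<in> Pi\<^sub>E UNIV Ub" "Pi\<^sub>E UNIV Ub \<subseteq> Wp"
    by auto
  define F0 where "F0 = {i. Ub i \<noteq> UNIV}"
  have F0: "finite F0" using Ub(1) by (simp add: F0_def)
  have "\<exists>\<delta>>0. \<forall>y\<in>F0. (\<forall>t. \<bar>t - xs0 y\<bar> < \<delta> \<longrightarrow> t \<in> Ub y)"
  proof (rule finite_delta[OF F0])
    show "\<forall>y\<in>F0. \<exists>d>0. \<forall>t. \<bar>t - xs0 y\<bar> < d \<longrightarrow> t \<in> Ub y"
    proof
      fix y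
      have "open (Ub y)" using Ub(2) by simp
      moreover have "xs0 y \<in> Ub y" using Ub(3) by (simp add: PiE_iff)
      ultimately obtain d where "d > 0" "ball (xs0 y) d \<subseteq> Ub y" using open_contains_ball by blast
      then show "\<exists>d>0. \<forall>t. \<bar>t - xs0 y\<bar> < d \<longrightarrow> t \<in> Ub y"
        by (intro exI[of _ d]) (auto simp: dist_real_def abs_minus_commute)
    qed
  qed auto
  then obtain \<delta> where \<delta>: "\<delta> > 0" "\<And>y t. y \<in> F0 \<Longrightarrow> \<bar>t - xs0 y\<bar> < \<delta> \<Longrightarrow> t \<in> Ub y" by auto
  define W0 where "W0 = {g \<in> dual_space tau. \<forall>y\<in>F0. \<bar>g y - xs0 y\<bar> < \<delta>}"
  have W0W: "W0 \<subseteq> W"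
  proof
    fix g assume g: "g \<in> W0"
    have "g \<in> Pi\<^sub>E UNIV Ub"
    proof (simp add: PiE_iff, intro allI)
      fix i show "g i \<in> Ub i"
      proof (cases "i \<in> F0")
        case True then show ?thesis using g \<delta>(2) by (auto simp: W0_def)
      next
        case False then show ?thesis by (simp add: F0_def)
      qed
    qed
    then show "g \<in> W" using g Ub(4) Wp(2) by (auto simp: W0_def)
  qed
  have xs0W0: "xs0 \<in> W0" using xs0d \<delta> by (simp add: W0_def)
  have "openin tau {x \<in> topspace tau. x + x0 \<in> U}"
    by (rule openin_continuous_map_preimage[OF trans_cont[OF lcs] UW(1)])
  moreover have "0 \<in> {x \<in> topspace tau. x + x0 \<in> U}" using UW(3) lcs_top[OF lcs] by simp
  ultimately have "\<exists>C. openin tau C \<and> convex C \<and> 0 \<in> C \<and> C \<subseteq> {x \<in> topspace tau. x + x0 \<in> U}"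
    using lcs unfolding lcs_def by blast
  then obtain C where C: "openin tau C" "convex C" "0 \<in> C" "C \<subseteq> {x \<in> topspace tau. x + x0 \<in> U}"
    by auto
  have CU: "x0 + c \<in> U" if "c \<in> C" for c using C(4) that by (auto simp: add.commute)
  define L :: "('a \<times> ('a \<Rightarrow> real) \<times> real) set" where "L = {v. fst (snd v) \<in> dual_space tau}"
  define A :: "('a \<times> ('a \<Rightarrow> real) \<times> real) set" where
    "A = {v. (fst v, fst (snd v)) \<in> Zset tau \<and> h (fst v, fst (snd v)) \<le> ereal (snd (snd v))}"
  define B :: "('a \<times> ('a \<Rightarrow> real) \<times> real) set" where
    "B = {v. fst v - x0 \<in> C \<and> fst (snd v) \<in> W0 \<and> snd (snd v) < r}"
  have Ladd: "u + v \<in> L" if "u \<in> L" "v \<in> L" for u v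
    using that by (auto simp: L_def intro: dual_add)
  have Lsc: "c *\<^sub>R u \<in> L" if "u \<in> L" for u c
    using that by (auto simp: L_def intro: dual_scale)
  have Ldiff: "u - v \<in> L" if "u \<in> L" "v \<in> L" for u v
    using Ladd[OF that(1) Lsc[OF that(2), of "-1"]] by simp
  have AL: "A \<subseteq> L" by (auto simp: A_def L_def Zset_def)
  have BL: "B \<subseteq> L" by (auto simp: B_def L_def W0_def)
  have disj: "A \<inter> B = {}"
  proof (rule ccontr)
    assume "A \<inter> B \<noteq> {}"
    then obtain v where vA: "v \<in> A" and vB: "v \<in> B" by blast
    have "fst v - x0 \<in> C" using vB by (simp add: B_def)
    from CU[OF this] have "x0 + (fst v - x0) \<in> U" .
    then have "fst v \<in> U" by simp
    moreover have "fst (snd v) \<in> W" using W0W vB by (auto simp: B_def)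
    ultimately have h1: "ereal r < h (fst v, fst (snd v))" by (rule hgt)
    have h2: "h (fst v, fst (snd v)) \<le> ereal (snd (snd v))" using vA by (simp add: A_def)
    have "ereal r < ereal (snd (snd v))" using h1 h2 by (rule less_le_trans)
    moreover have "snd (snd v) < r" using vB by (simp add: B_def)
    ultimately show False by simp
  qed
  have convA: "convex A"
    unfolding convex_def
  proof (intro ballI allI impI)
    fix u v :: "'a \<times> ('a \<Rightarrow> real) \<times> real" and a b :: real
    assume uv: "u \<in> A" "v \<in> A" and ab: "0 \<le> a" "0 \<le> b" "a + b = 1"
    obtain x f s where u: "u = (x, f, s)" by (cases u) auto
    obtain y g t where v: "v = (y, g, t)" by (cases v) auto
    have b: "b = 1 - a" using ab by simp
    have fe: "a *\<^sub>R f + b *\<^sub>R g = (\<lambda>z. a * f z + (1 - a) * g z)" by (simp add: fun_eq_iff b)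
    have inZ: "(x, f) \<in> Zset tau" "(y, g) \<in> Zset tau" using uv u v by (auto simp: A_def)
    have hh: "h (x, f) \<le> ereal s" "h (y, g) \<le> ereal t" using uv u v by (auto simp: A_def)
    have "h (a *\<^sub>R x + (1 - a) *\<^sub>R y, \<lambda>z. a * f z + (1 - a) * g z) \<le> ereal (a * s + (1 - a) * t)"
      using cvx[unfolded convex_Z_def, rule_format, of x f y g s t a] inZ hh ab b by simp
    moreover have "(a *\<^sub>R x + (1 - a) *\<^sub>R y, \<lambda>z. a * f z + (1 - a) * g z) \<in> Zset tau"
      using inZ by (auto simp: Zset_def intro: dual_comb)
    ultimately show "a *\<^sub>R u + b *\<^sub>R v \<in> A"
      unfolding A_def u v using fe b by simp
  qed
  have convW0: "convex W0"
    unfolding convex_def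
  proof (intro ballI allI impI)
    fix f g :: "'a \<Rightarrow> real" and a b :: real
    assume fg: "f \<in> W0" "g \<in> W0" and ab: "0 \<le> a" "0 \<le> b" "a + b = 1"
    have fd: "f \<in> dual_space tau" "g \<in> dual_space tau" using fg by (auto simp: W0_def)
    have "a *\<^sub>R f + b *\<^sub>R g \<in> dual_space tau" using dual_add[OF dual_scale[OF fd(1)] dual_scale[OF fd(2)]] .
    moreover have "\<bar>(a *\<^sub>R f + b *\<^sub>R g) y - xs0 y\<bar> < \<delta>" if y: "y \<in> F0" for y
    proof -
      have "(a *\<^sub>R f + b *\<^sub>R g) y - xs0 y = a * (f y - xs0 y) + b * (g y - xs0 y) + (a + b - 1) * xs0 y"
        by (simp add: algebra_simps)
      also have "\<dots> = a * (f y - xs0 y) + b * (g y - xs0 y)" using ab(3) by simp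
      also have "\<bar>\<dots>\<bar> \<le> a * \<bar>f y - xs0 y\<bar> + b * \<bar>g y - xs0 y\<bar>"
        using ab by (simp add: abs_triangle_ineq[THEN order_trans] abs_mult)
      also have "\<dots> < \<delta>"
      proof -
        have fy0: "\<bar>f y - xs0 y\<bar> \<le> \<delta>" "\<bar>g y - xs0 y\<bar> \<le> \<delta>" using fg y by (auto simp: W0_def less_imp_le)
        have "a * \<bar>f y - xs0 y\<bar> \<le> a * \<delta>" "b * \<bar>g y - xs0 y\<bar> \<le> b * \<delta>"
          using fy0 ab by (auto intro!: mult_left_mono)
        moreover have "a * \<bar>f y - xs0 y\<bar> < a * \<delta> \<or> b * \<bar>g y - xs0 y\<bar> < b * \<delta>"
        proof -
          have fy: "\<bar>f y - xs0 y\<bar> < \<delta>" "\<bar>g y - xs0 y\<bar> < \<delta>" using fg y by (auto simp: W0_def)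
          show ?thesis
          proof (cases "a = 0")
            case True then have "b = 1" using ab by simp
            then show ?thesis using fy by simp
          next
            case False then have "a > 0" using ab by simp
            then show ?thesis using fy by simp
          qed
        qed
        ultimately have "a * \<bar>f y - xs0 y\<bar> + b * \<bar>g y - xs0 y\<bar> < a * \<delta> + b * \<delta>" by linarith
        also have "\<dots> = (a + b) * \<delta>" by (simp add: distrib_right)
        also have "\<dots> = \<delta>" using ab by simp
        finally show ?thesis .
      qed
      finally show ?thesis .
    qed
    ultimately show "a *\<^sub>R f + b *\<^sub>R g \<in> W0" by (simp add: W0_def)
  qed
  have convB: "convex B"
    unfolding convex_def
  proof (intro ballI allI impI)
    fix u v :: "'a \<times> ('a \<Rightarrow> real) \<times> real" and a b :: real
    assume uv: "u \<in> B" "v \<in> B" and ab: "0 \<le> a" "0 \<le> b" "a + b = 1"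
    have "fst (a *\<^sub>R u + b *\<^sub>R v) - x0 = a *\<^sub>R (fst u - x0) + b *\<^sub>R (fst v - x0)"
      using ab by (simp add: algebra_simps flip: scaleR_add_left)
    also have "\<dots> \<in> C" using convexD[OF C(2)] uv ab by (auto simp: B_def)
    finally have 1: "fst (a *\<^sub>R u + b *\<^sub>R v) - x0 \<in> C" .
    have 2: "fst (snd (a *\<^sub>R u + b *\<^sub>R v)) \<in> W0"
      using convexD[OF convW0] uv ab by (auto simp: B_def)
    have "a * snd (snd u) + b * snd (snd v) < r"
    proof (cases "a = 0")
      case True then show ?thesis using uv ab by (auto simp: B_def)
    next
      case False
      then have "a * snd (snd u) < a * r" using uv ab by (auto simp: B_def)
      moreover have "b * snd (snd v) \<le> b * r" using uv ab by (auto simp: B_def intro!: mult_left_mono)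
      ultimately have "a * snd (snd u) + b * snd (snd v) < a * r + b * r" by linarith
      also have "\<dots> = (a + b) * r" by (simp add: distrib_right)
      also have "\<dots> = r" using ab by simp
      finally show ?thesis .
    qed
    with 1 2 show "a *\<^sub>R u + b *\<^sub>R v \<in> B" by (simp add: B_def)
  qed
  obtain xa ga where za: "za = (xa, ga)" by (cases za)
  have "ereal (\<beta> + ps (fst za) + snd za p) \<le> h za" using minor[OF dom(1)] .
  then have hza1: "h za \<noteq> -\<infinity>" by auto
  define ha where "ha = real_of_ereal (h za)"
  have hza: "h za = ereal ha" using hza1 dom(2) unfolding ha_def by (cases "h za") auto
  define a0 where "a0 = (xa, ga, ha)"
  have a0A: "a0 \<in> A" using dom(1) hza za by (simp add: A_def a0_def)
  define b0 where "b0 = (x0, xs0, r - 1)"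
  have b0B: "b0 \<in> B" using C(3) xs0W0 by (simp add: B_def b0_def)
  have core: "\<exists>e>0. b0 + e *\<^sub>R d \<in> B" if dL: "d \<in> L" for d
  proof -
    obtain dx dg ds where d: "d = (dx, dg, ds)" by (cases d) auto
    have dg: "dg \<in> dual_space tau" using dL d by (simp add: L_def)
    obtain e1 where e1: "e1 > 0" "\<And>t. \<bar>t\<bar> < e1 \<Longrightarrow> t *\<^sub>R dx \<in> C"
      using absorb[OF lcs C(1) C(3), of dx] by auto
    have "\<exists>e2>0. \<forall>y\<in>F0. (\<forall>t. 0 \<le> t \<and> t \<le> e2 \<longrightarrow> \<bar>t * dg y\<bar> < \<delta>)"
    proof (rule finite_delta[OF F0])
      show "\<forall>y\<in>F0. \<exists>e>0. \<forall>t. 0 \<le> t \<and> t \<le> e \<longrightarrow> \<bar>t * dg y\<bar> < \<delta>"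
      proof
        fix y
        define e where "e = \<delta> / (\<bar>dg y\<bar> + 1)"
        have e: "e > 0" using \<delta>(1) by (simp add: e_def add_pos_nonneg)
        have "\<bar>t * dg y\<bar> < \<delta>" if t: "0 \<le> t" "t \<le> e" for t
        proof -
          have "\<bar>t * dg y\<bar> = t * \<bar>dg y\<bar>" using t by (simp add: abs_mult)
          also have "\<dots> \<le> e * \<bar>dg y\<bar>" using t by (simp add: mult_right_mono)
          also have "\<dots> < e * (\<bar>dg y\<bar> + 1)" using e by simp
          also have "\<dots> = \<delta>" by (simp add: e_def)
          finally show ?thesis .
        qed
        with e show "\<exists>e>0. \<forall>t. 0 \<le> t \<and> t \<le> e \<longrightarrow> \<bar>t * dg y\<bar> < \<delta>" by blast
      qed
    qed auto
    then obtain e2 where e2: "e2 > 0" "\<And>y t. y \<in> F0 \<Longrightarrow> 0 \<le> t \<Longrightarrow> t \<le> e2 \<Longrightarrow> \<bar>t * dg y\<bar> < \<delta>"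
      by auto
    define e3 where "e3 = 1 / (\<bar>ds\<bar> + 1)"
    have e3: "e3 > 0" by (simp add: e3_def add_pos_nonneg)
    define e where "e = min (e1 / 2) (min e2 e3)"
    have e: "e > 0" "\<bar>e\<bar> < e1" "e \<le> e2" "e \<le> e3" using e1 e2 e3 by (auto simp: e_def)
    have 1: "fst (b0 + e *\<^sub>R d) - x0 \<in> C" using e1(2)[OF e(2)] by (simp add: b0_def d)
    have "xs0 + e *\<^sub>R dg \<in> dual_space tau" by (rule dual_add[OF xs0d dual_scale[OF dg]])
    moreover have "\<forall>y\<in>F0. \<bar>(xs0 + e *\<^sub>R dg) y - xs0 y\<bar> < \<delta>"
      using e2(2) e by (simp add: less_imp_le)
    ultimately have 2: "fst (snd (b0 + e *\<^sub>R d)) \<in> W0" by (simp add: W0_def b0_def d)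
    have "e * ds \<le> e * \<bar>ds\<bar>" using e by (simp add: mult_left_mono)
    also have "\<dots> \<le> e3 * \<bar>ds\<bar>" using e by (simp add: mult_right_mono)
    also have "\<dots> < 1" by (simp add: e3_def)
    finally have 3: "snd (snd (b0 + e *\<^sub>R d)) < r" by (simp add: b0_def d)
    show ?thesis using 1 2 3 e(1) by (intro exI[of _ e]) (simp add: B_def)
  qed
  define K where "K = {b - a - (b0 - a0) | a b. a \<in> A \<and> b \<in> B}"
  have convK: "convex K"
    unfolding convex_def
  proof (intro ballI allI impI)
    fix k1 k2 :: "'a \<times> ('a \<Rightarrow> real) \<times> real" and u v :: real
    assume k: "k1 \<in> K" "k2 \<in> K" and uv: "0 \<le> u" "0 \<le> v" "u + v = 1"
    obtain a1 b1 where 1: "a1 \<in> A" "b1 \<in> B" "k1 = b1 - a1 - (b0 - a0)" using k(1) by (auto simp: K_def)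
    obtain a2 b2 where 2: "a2 \<in> A" "b2 \<in> B" "k2 = b2 - a2 - (b0 - a0)" using k(2) by (auto simp: K_def)
    have "u *\<^sub>R k1 + v *\<^sub>R k2 = (u *\<^sub>R b1 + v *\<^sub>R b2) - (u *\<^sub>R a1 + v *\<^sub>R a2) - (u + v) *\<^sub>R (b0 - a0)"
      unfolding 1(3) 2(3) by (simp add: algebra_simps)
    also have "\<dots> = (u *\<^sub>R b1 + v *\<^sub>R b2) - (u *\<^sub>R a1 + v *\<^sub>R a2) - (b0 - a0)" using uv by simp
    finally have eq: "u *\<^sub>R k1 + v *\<^sub>R k2 = (u *\<^sub>R b1 + v *\<^sub>R b2) - (u *\<^sub>R a1 + v *\<^sub>R a2) - (b0 - a0)" .
    have "u *\<^sub>R a1 + v *\<^sub>R a2 \<in> A" using convexD[OF convA 1(1) 2(1)] uv by simp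
    moreover have "u *\<^sub>R b1 + v *\<^sub>R b2 \<in> B" using convexD[OF convB 1(2) 2(2)] uv by simp
    ultimately show "u *\<^sub>R k1 + v *\<^sub>R k2 \<in> K" unfolding eq K_def by blast
  qed
  have K0: "0 \<in> K"
  proof -
    have "0 = b0 - a0 - (b0 - a0)" by simp
    then show ?thesis unfolding K_def using a0A b0B by blast
  qed
  have absK: "\<exists>e>0. e *\<^sub>R d \<in> K" if dL: "d \<in> L" for d
  proof -
    obtain e where e: "e > 0" "b0 + e *\<^sub>R d \<in> B" using core[OF dL] by blast
    have "e *\<^sub>R d = (b0 + e *\<^sub>R d) - a0 - (b0 - a0)" by simp
    then have "e *\<^sub>R d \<in> K" unfolding K_def using e(2) a0A by blast
    with e(1) show ?thesis by blast
  qed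
  define v0 where "v0 = a0 - b0"
  have v0L: "v0 \<in> L" unfolding v0_def
    using Ldiff[OF subsetD[OF AL a0A] subsetD[OF BL b0B]] .
  have v0K: "v0 \<notin> K"
  proof
    assume "v0 \<in> K"
    then obtain a b where ab: "a \<in> A" "b \<in> B" "v0 = b - a - (b0 - a0)" by (auto simp: K_def)
    then have "b = a" by (simp add: v0_def algebra_simps)
    with ab disj show False by blast
  qed
  obtain F where F: "\<forall>x\<in>L. \<forall>y\<in>L. F (x+y) = F x + F y" "\<forall>x\<in>L. \<forall>c. F (c *\<^sub>R x) = c * F x"
    "F v0 = 1" "\<forall>k\<in>K\<inter>L. F k \<le> 1"
    using hb_sep[of L K v0] Ladd Lsc convK K0 absK v0L v0K by blast
  have Fsub: "F (x - y) = F x - F y" if "x \<in> L" "y \<in> L" for x y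
  proof -
    have "F (x + (-1) *\<^sub>R y) = F x + F ((-1) *\<^sub>R y)" using F(1) that Lsc by blast
    also have "F ((-1) *\<^sub>R y) = (-1) * F y" using F(2) that by blast
    finally show ?thesis by simp
  qed
  have FAB: "F b \<le> F a" if ab: "a \<in> A" "b \<in> B" for a b
  proof -
    have aL: "a \<in> L" and bL: "b \<in> L" using ab AL BL by auto
    have a0L: "a0 \<in> L" and b0L: "b0 \<in> L" using a0A b0B AL BL by auto
    have "b - a - (b0 - a0) \<in> K" unfolding K_def using ab by blast
    moreover have "b - a \<in> L" "b0 - a0 \<in> L" using aL bL a0L b0L Ldiff by simp_all
    moreover have "b - a - (b0 - a0) \<in> L" using calculation(2,3) Ldiff by simp
    ultimately have "F (b - a) - F (b0 - a0) \<le> 1" using F(4) Fsub by (metis IntI)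
    moreover have "F (b - a) = F b - F a" using Fsub aL bL by blast
    moreover have "F (b0 - a0) = F b0 - F a0" using Fsub a0L b0L by blast
    moreover have "F a0 - F b0 = 1" using F(3) Fsub a0L b0L by (simp add: v0_def)
    ultimately show ?thesis by linarith
  qed
  obtain e where e: "e > 0" "b0 + e *\<^sub>R v0 \<in> B" using core[OF v0L] by blast
  have Fb0e: "F (b0 + e *\<^sub>R v0) = F b0 + e"
  proof -
    have b0L: "b0 \<in> L" using b0B BL by auto
    have "F (b0 + e *\<^sub>R v0) = F b0 + F (e *\<^sub>R v0)" using F(1) b0L Lsc[OF v0L] by blast
    also have "F (e *\<^sub>R v0) = e * F v0" using F(2) v0L by blast
    finally show ?thesis using F(3) by simp
  qed
  have Fstrict: "F b0 + e \<le> F a" if "a \<in> A" for a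
    using FAB[OF that e(2)] Fb0e by simp
  have zd: "(0::'a \<Rightarrow> real) \<in> dual_space tau" using zero_dual by (simp add: zero_fun_def)
  define f where "f x = F (x, 0, 0)" for x
  define gg where "gg q = F (0, q, 0)" for q
  define aa where "aa = F (0, 0, 1)"
  have Fdec: "F (x, q, s) = f x + gg q + s * aa" if qd: "q \<in> dual_space tau" for x q s
  proof -
    have L1: "(x, 0, 0) \<in> L" "(0, q, 0) \<in> L" "(0, 0, 1) \<in> L" using zd qd by (auto simp: L_def)
    have "(x, q, s) = (x, 0, 0) + ((0, q, 0) + s *\<^sub>R (0, 0, 1))" by simp
    then have "F (x, q, s) = F (x, 0, 0) + (F (0, q, 0) + F (s *\<^sub>R (0, 0, 1)))"
      using F(1) L1 Ladd Lsc by metis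
    also have "F (s *\<^sub>R (0, 0, 1)) = s * aa" using F(2) L1 unfolding aa_def by blast
    finally show ?thesis by (simp add: f_def gg_def zero_fun_def)
  qed
  have flin: "linear f"
  proof (rule linearI)
    fix u v :: 'a
    have L1: "(u, 0, 0) \<in> L" "(v, 0, 0) \<in> L" using zd by (auto simp: L_def)
    have "(u + v, 0::'a\<Rightarrow>real, 0::real) = (u, 0, 0) + (v, 0, 0)" by simp
    then show "f (u + v) = f u + f v" unfolding f_def using F(1) L1 by metis
  next
    fix c :: real and u :: 'a
    have L1: "(u, 0, 0) \<in> L" using zd by (auto simp: L_def)
    have "(c *\<^sub>R u, 0::'a\<Rightarrow>real, 0::real) = c *\<^sub>R (u, 0, 0)" by simp
    then show "f (c *\<^sub>R u) = c *\<^sub>R f u" unfolding f_def using F(2) L1 by (metis real_scaleR_def)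
  qed
  have gadd: "gg (q + q') = gg q + gg q'" if "q \<in> dual_space tau" "q' \<in> dual_space tau" for q q'
  proof -
    have L1: "(0, q, 0) \<in> L" "(0, q', 0) \<in> L" using that by (auto simp: L_def)
    have "(0::'a, q + q', 0::real) = (0, q, 0) + (0, q', 0)" by simp
    then show ?thesis unfolding gg_def using F(1) L1 by metis
  qed
  have gsc: "gg (c *\<^sub>R q) = c * gg q" if "q \<in> dual_space tau" for q c
  proof -
    have L1: "(0, q, 0) \<in> L" using that by (auto simp: L_def)
    have "(0::'a, c *\<^sub>R q, 0::real) = c *\<^sub>R (0, q, 0)" by simp
    then show ?thesis unfolding gg_def using F(2) L1 by metis
  qed
  have gad: "ga \<in> dual_space tau" using dom(1) za by (simp add: Zset_def)
  have Fa0: "F a0 = f xa + gg ga + ha * aa" using Fdec[OF gad] by (simp add: a0_def)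
  have Fb0: "F b0 = f x0 + gg xs0 + (r - 1) * aa" using Fdec[OF xs0d] by (simp add: b0_def)
  have aa: "aa \<ge> 0"
  proof (rule ccontr)
    assume "\<not> aa \<ge> 0"
    then have neg: "aa < 0" by simp
    define n where "n = max 0 ((f xa + gg ga + ha * aa - F b0) / (- aa))"
    have n: "n \<ge> 0" "n * (- aa) \<ge> f xa + gg ga + ha * aa - F b0"
      using neg by (auto simp: n_def field_simps max_def)
    have "(xa, ga, ha + n) \<in> A" using dom(1) za hza n(1) by (simp add: A_def)
    from Fstrict[OF this] have "F b0 + e \<le> f xa + gg ga + (ha + n) * aa" using Fdec[OF gad] by simp
    with n e(1) show False by (simp add: algebra_simps)
  qed
  have fd: "f \<in> dual_space tau"
  proof -
    have "continuous_map tau euclideanreal f"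
    proof (rule lin_cont[OF lcs flin C(1) C(3)])
      fix c assume c: "c \<in> C"
      have "(x0 + c, xs0, r - 1) \<in> B" using c xs0W0 by (simp add: B_def)
      from FAB[OF a0A this] have "f (x0 + c) + gg xs0 + (r - 1) * aa \<le> F a0" using Fdec[OF xs0d] by simp
      then show "f c \<le> F a0 - f x0 - gg xs0 - (r - 1) * aa" by (simp add: linear_add[OF flin])
    qed
    with flin show ?thesis by (simp add: dual_space_def)
  qed
  have gvan: "gg q = 0" if q: "q \<in> dual_space tau" "\<forall>y\<in>F0. q y = 0" for q
  proof (rule ccontr)
    assume nz: "gg q \<noteq> 0"
    define Mq where "Mq = F a0 - f x0 - gg xs0 - (r - 1) * aa"
    define t where "t = (\<bar>Mq\<bar> + 1) / gg q"
    have tq: "t * gg q = \<bar>Mq\<bar> + 1" using nz by (simp add: t_def)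
    have qt: "xs0 + t *\<^sub>R q \<in> dual_space tau" by (rule dual_add[OF xs0d dual_scale[OF q(1)]])
    have "xs0 + t *\<^sub>R q \<in> W0" using qt q(2) \<delta>(1) by (simp add: W0_def)
    then have "(x0, xs0 + t *\<^sub>R q, r - 1) \<in> B" using C(3) by (simp add: B_def)
    from FAB[OF a0A this] have "f x0 + gg (xs0 + t *\<^sub>R q) + (r - 1) * aa \<le> F a0" using Fdec[OF qt] by simp
    moreover have "gg (xs0 + t *\<^sub>R q) = gg xs0 + t * gg q"
      using gadd[OF xs0d dual_scale[OF q(1)]] gsc[OF q(1)] by simp
    ultimately have "t * gg q \<le> Mq" by (simp add: Mq_def)
    with tq show False by simp
  qed
  have "\<exists>y. \<forall>q\<in>dual_space tau. gg q = q y"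
  proof (rule fin_rep[OF F0])
    show "\<And>q q'. q \<in> dual_space tau \<Longrightarrow> q' \<in> dual_space tau \<Longrightarrow> q + q' \<in> dual_space tau" by (rule dual_add)
    show "\<And>c q. q \<in> dual_space tau \<Longrightarrow> c *\<^sub>R q \<in> dual_space tau" by (rule dual_scale)
    show "\<And>q. q \<in> dual_space tau \<Longrightarrow> linear q" by (rule dual_linear)
    show "\<And>q q'. q \<in> dual_space tau \<Longrightarrow> q' \<in> dual_space tau \<Longrightarrow> gg (q + q') = gg q + gg q'" by (rule gadd)
    show "\<And>c q. q \<in> dual_space tau \<Longrightarrow> gg (c *\<^sub>R q) = c * gg q" by (rule gsc)
    show "\<And>q. q \<in> dual_space tau \<Longrightarrow> \<forall>y\<in>F0. q y = 0 \<Longrightarrow> gg q = 0" by (rule gvan)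
  qed
  then obtain y where gy: "\<And>q. q \<in> dual_space tau \<Longrightarrow> gg q = q y" by blast
  have I1: "f x0 + xs0 y + s' * aa \<le> f x + q y + s * aa"
    if w: "(x, q) \<in> Zset tau" "h (x, q) = ereal s" and s': "s' < r" for x q s s'
  proof -
    have qd: "q \<in> dual_space tau" using w by (simp add: Zset_def)
    have "(x, q, s) \<in> A" using w by (simp add: A_def)
    moreover have "(x0, xs0, s') \<in> B" using C(3) xs0W0 s' by (simp add: B_def)
    ultimately have "F (x0, xs0, s') \<le> F (x, q, s)" by (rule FAB)
    then show ?thesis using Fdec[OF qd] Fdec[OF xs0d] gy[OF qd] gy[OF xs0d] by simp
  qed
  have I2: "f x0 + xs0 y + (r - 1) * aa + e \<le> f x + q y + s * aa"
    if w: "(x, q) \<in> Zset tau" "h (x, q) = ereal s" for x q s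
  proof -
    have qd: "q \<in> dual_space tau" using w by (simp add: Zset_def)
    have "(x, q, s) \<in> A" using w by (simp add: A_def)
    from Fstrict[OF this] show ?thesis using Fdec[OF qd] Fb0 gy[OF qd] gy[OF xs0d] by simp
  qed
  have hfin: "\<exists>s. h w = ereal s" if "w \<in> Zset tau" "h w \<noteq> \<infinity>" for w
  proof -
    have "h w \<noteq> -\<infinity>" using minor[OF that(1)] by auto
    then show ?thesis using that(2) by (cases "h w") auto
  qed
  show ?thesis
  proof (cases "aa = 0")
    case False
    then have ap: "aa > 0" using aa by simp
    define \<alpha> where "\<alpha> = r + (f x0 + xs0 y) / aa"
    define ys where "ys = (\<lambda>x. (-1 / aa) * f x)"
    define yy where "yy = (-1 / aa) *\<^sub>R y"
    have ysd: "ys \<in> dual_space tau" unfolding ys_def by (rule dual_scale'[OF fd])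
    have lin_q: "q yy = (-1 / aa) * q y" if "q \<in> dual_space tau" for q
      unfolding yy_def using linear_scale[OF dual_linear[OF that], of "-1/aa" y] by (simp only: real_scaleR_def)
    have "ereal (\<alpha> + ys (fst w) + snd w yy) \<le> h w" if w: "w \<in> Zset tau" for w
    proof (cases "h w = \<infinity>")
      case True then show ?thesis by simp
    next
      case False
      obtain x q where wq: "w = (x, q)" by (cases w)
      obtain s where s: "h w = ereal s" using hfin[OF w False] by blast
      have qd: "q \<in> dual_space tau" using w wq by (simp add: Zset_def)
      have "r \<le> s + (f x + q y - f x0 - xs0 y) / aa"
      proof (rule dense_le)
        fix s' assume "s' < r"
        from I1[OF _ _ this, of x q s] w s wq
        have "f x0 + xs0 y + s' * aa \<le> f x + q y + s * aa" by simp
        then have "s' * aa \<le> s * aa + (f x + q y - f x0 - xs0 y)" by simp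
        then show "s' \<le> s + (f x + q y - f x0 - xs0 y) / aa" using ap by (simp add: field_simps)
      qed
      moreover have "(f x + q y - f x0 - xs0 y) / aa = f x / aa + q y / aa - f x0 / aa - xs0 y / aa"
        by (simp add: diff_divide_distrib add_divide_distrib)
      moreover have "\<alpha> + ys x + q yy = r + f x0 / aa + xs0 y / aa - f x / aa - q y / aa"
        by (simp add: \<alpha>_def ys_def lin_q[OF qd] add_divide_distrib)
      ultimately have "\<alpha> + ys x + q yy \<le> s" by linarith
      then show ?thesis using s wq by simp
    qed
    moreover have "r \<le> \<alpha> + ys x0 + xs0 yy"
      by (simp add: \<alpha>_def ys_def lin_q[OF xs0d] add_divide_distrib)
    ultimately show ?thesis using ysd by blast
  next
    case True
    define k where "k = max 0 ((r - (\<beta> + ps x0 + xs0 p)) / e)"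
    have k: "k \<ge> 0" "k * e \<ge> r - (\<beta> + ps x0 + xs0 p)"
      using e(1) by (auto simp: k_def max_def field_simps)
    define \<alpha> where "\<alpha> = \<beta> + k * (f x0 + xs0 y + e)"
    define ys where "ys = (\<lambda>x. 1 * ps x + (- k) * f x)"
    define yy where "yy = p + (- k) *\<^sub>R y"
    have ysd: "ys \<in> dual_space tau" unfolding ys_def by (rule dual_comb[OF ps fd])
    have lin_q: "q yy = q p - k * q y" if "q \<in> dual_space tau" for q
      unfolding yy_def using linear_add[OF dual_linear[OF that], of p "(- k) *\<^sub>R y"] linear_scale[OF dual_linear[OF that], of "- k" y]
      by simp
    have "ereal (\<alpha> + ys (fst w) + snd w yy) \<le> h w" if w: "w \<in> Zset tau" for w
    proof (cases "h w = \<infinity>")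
      case True then show ?thesis by simp
    next
      case False
      obtain x q where wq: "w = (x, q)" by (cases w)
      obtain s where s: "h w = ereal s" using hfin[OF w False] by blast
      have qd: "q \<in> dual_space tau" using w wq by (simp add: Zset_def)
      have "f x0 + xs0 y + e \<le> f x + q y" using I2[of x q s] w s wq True by simp
      then have "k * (f x0 + xs0 y + e) \<le> k * (f x + q y)" using k(1) by (simp add: mult_left_mono)
      then have "\<alpha> + ys x + q yy \<le> \<beta> + ps x + q p"
        by (simp add: \<alpha>_def ys_def lin_q[OF qd] algebra_simps)
      moreover have "ereal (\<beta> + ps x + q p) \<le> h w" using minor[OF w] wq by simp
      ultimately show ?thesis using wq by (metis ereal_less_eq(3) fst_conv snd_conv order_trans)
    qed
    moreover have "r \<le> \<alpha> + ys x0 + xs0 yy"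
      using k by (simp add: \<alpha>_def ys_def lin_q[OF xs0d] algebra_simps)
    ultimately show ?thesis using ysd by blast
  qed
qed


lemma alg_key:
  fixes t a A c R :: real
  assumes t: "t > 0" and E: "t * t * a + t * (1 - t) * A + (1 - t) * (1 - t) * c \<le> t * R + (1 - t) * c"
  shows "A - c \<le> R + t * (A - c - a)"
proof -
  have "t * (R + t * (A - c - a)) - t * (A - c) = (t * R + (1 - t) * c) - (t * t * a + t * (1 - t) * A + (1 - t) * (1 - t) * c)"
    by (simp add: algebra_simps)
  then have "t * (A - c) \<le> t * (R + t * (A - c - a))" using E by linarith
  then show ?thesis using t by (simp add: mult_le_cancel_left_pos)
qed

lemma cpl_comb:
  assumes "f \<in> dual_space tau" "g \<in> dual_space tau"
  shows "cpl (t *\<^sub>R x + (1 - t) *\<^sub>R y, \<lambda>u. t * f u + (1 - t) * g u)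
    = ereal (t * t * f x + t * (1 - t) * (f y + g x) + (1 - t) * (1 - t) * g y)"
proof -
  have lf: "linear f" and lg: "linear g" using assms by (auto simp: dual_space_def)
  have e1: "f (t *\<^sub>R x + (1 - t) *\<^sub>R y) = t * f x + (1 - t) * f y"
    by (simp only: linear_add[OF lf] linear_scale[OF lf] real_scaleR_def)
  have e2: "g (t *\<^sub>R x + (1 - t) *\<^sub>R y) = t * g x + (1 - t) * g y"
    by (simp only: linear_add[OF lg] linear_scale[OF lg] real_scaleR_def)
  show ?thesis
    unfolding cpl_def fst_conv snd_conv e1 e2 by (simp add: algebra_simps)
qed

lemma h_ge_pair:
  assumes hR: "h \<in> R_class tau" and u: "(u, us) \<in> Zset tau" "h (u, us) = cpl (u, us)" and w: "w \<in> Zset tau"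
  shows "ereal (snd w u + us (fst w) - us u) \<le> h w"
proof (cases "h w = \<infinity>")
  case True then show ?thesis by simp
next
  case False
  obtain x f where wx: "w = (x, f)" by (cases w)
  have "h w \<noteq> -\<infinity>" using hR w by (auto simp: R_class_def proper_Z_def)
  then obtain R where R: "h w = ereal R" using False by (cases "h w") auto
  have fd: "f \<in> dual_space tau" and usd: "us \<in> dual_space tau" using w wx u by (auto simp: Zset_def)
  have cvx: "convex_Z tau h" and ge: "\<And>z. z \<in> Zset tau \<Longrightarrow> cpl z \<le> h z" using hR by (auto simp: R_class_def)
  have "f u + us x - us u \<le> R"
  proof (rule small_le[of 1])
    fix t :: real assume t: "0 < t" "t \<le> 1"
    let ?z = "(t *\<^sub>R x + (1 - t) *\<^sub>R u, \<lambda>z. t * f z + (1 - t) * us z)"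
    have zZ: "?z \<in> Zset tau" using fd usd by (auto simp: Zset_def intro: dual_comb)
    have "h ?z \<le> ereal (t * R + (1 - t) * us u)"
      using cvx[unfolded convex_Z_def, rule_format, of x f u us R "us u" t] w wx u R t by (simp add: cpl_def)
    moreover have "cpl ?z \<le> h ?z" using ge[OF zZ] .
    ultimately have "cpl ?z \<le> ereal (t * R + (1 - t) * us u)" by (rule order_trans[rotated])
    then have "t * t * f x + t * (1 - t) * (f u + us x) + (1 - t) * (1 - t) * us u \<le> t * R + (1 - t) * us u"
      using cpl_comb[OF fd usd, of t x u] by simp
    from alg_key[OF t(1) this]
    show "f u + us x - us u \<le> R + t * (f u + us x - us u - f x)" by simp
  qed simp
  then show ?thesis using wx R by simp
qed

lemma part3:
  assumes lcs: "lcs tau" and T: "T \<subseteq> UNIV \<times> dual_space tau" and VD: "V \<inter> Domain T \<noteq> {}"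
    and ao: "alg_open V" and rep: "V_representable tau V T" and NI: "V_NI tau V T"
  shows "M_class (restr T V) \<and> V_identifies tau V T"
proof -
  let ?S = "restr T V"
  obtain h where hR: "h \<in> R_class tau" and hS: "{z \<in> Zset tau. h z = cpl z} \<inter> (V \<times> UNIV) = ?S"
    using rep unfolding V_representable_def by blast
  have cvx: "convex_Z tau h" and lsc: "lsc_Z tau h" and ge: "\<And>z. z \<in> Zset tau \<Longrightarrow> cpl z \<le> h z"
    using hR by (auto simp: R_class_def)
  have SZ: "?S \<subseteq> Zset tau" using T by (auto simp: restr_def Zset_def)
  have Sh: "h z = cpl z" if "z \<in> ?S" for z using hS that by blast
  have ST: "?S \<subseteq> UNIV \<times> dual_space tau" using T by (auto simp: restr_def)
  obtain s0 where s0: "s0 \<in> ?S" using VD by (auto simp: restr_def)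
  have mono: "monotone_op ?S"
    unfolding monotone_op_def
  proof (intro allI impI)
    fix x f y g assume xy: "(x, f) \<in> ?S \<and> (y, g) \<in> ?S"
    have fd: "f \<in> dual_space tau" and gd: "g \<in> dual_space tau" using xy ST by auto
    have zz: "(x,f) \<in> Zset tau" "(y,g) \<in> Zset tau" using xy SZ by auto
    let ?m = "((1/2) *\<^sub>R x + (1 - 1/2) *\<^sub>R y, \<lambda>u. (1/2) * f u + (1 - 1/2) * g u)"
    have "h ?m \<le> ereal ((1/2) * f x + (1 - 1/2) * g y)"
      using cvx[unfolded convex_Z_def, rule_format, of x f y g "f x" "g y" "1/2"] zz Sh xy
      by (simp add: cpl_def)
    moreover have "?m \<in> Zset tau" using dual_comb[OF fd gd, of "1/2" "1 - 1/2"] by (simp add: Zset_def)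
    then have "cpl ?m \<le> h ?m" by (rule ge)
    ultimately have "cpl ?m \<le> ereal ((1/2) * f x + (1 - 1/2) * g y)" by (rule order_trans[rotated])
    then have "(1/2) * (1/2) * f x + (1/2) * (1 - 1/2) * (f y + g x) + (1 - 1/2) * (1 - 1/2) * g y
        \<le> (1/2) * f x + (1 - 1/2) * g y"
      using cpl_comb[OF fd gd, of "1/2" x y] by simp
    then show "f x - f y - g x + g y \<ge> 0" by (simp add: field_simps)
  qed
  have MC: "M_class ?S" using mono s0 by (auto simp: M_class_def)
  obtain u0 us0 where s0': "s0 = (u0, us0)" by (cases s0)
  have us0d: "us0 \<in> dual_space tau" using s0 s0' ST by auto
  have minor: "ereal (- us0 u0 + us0 (fst w) + snd w u0) \<le> h w" if "w \<in> Zset tau" for w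
    using h_ge_pair[OF hR, of u0 us0 w] s0 s0' SZ Sh that by (auto simp: algebra_simps)
  have ident: "V_identifies tau V T"
    unfolding V_identifies_def
  proof
    fix z assume zin: "z \<in> {z \<in> Zset tau. fitz ?S z \<le> cpl z} \<inter> (V \<times> UNIV)"
    obtain x xs where zx: "z = (x, xs)" by (cases z)
    have zZ: "z \<in> Zset tau" and xV: "x \<in> V" and le: "fitz ?S z \<le> cpl z" using zin zx by auto
    have xsd: "xs \<in> dual_space tau" using zZ zx by (simp add: Zset_def)
    have eqz: "fitz ?S z = cpl z" using le NI zZ xV zx unfolding V_NI_def by (auto intro: antisym)
    have deriv: "ereal (snd w x + xs (fst w) - xs x) \<le> fitz ?S w" if wZ: "w \<in> Zset tau" for w
    proof (cases "fitz ?S w = \<infinity>")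
      case True then show ?thesis by simp
    next
      case False
      obtain xw g where wx: "w = (xw, g)" by (cases w)
      have gd: "g \<in> dual_space tau" using wZ wx by (simp add: Zset_def)
      have "fitz ?S w \<noteq> -\<infinity>" using fitz_upper[OF s0[unfolded s0'], of w] by auto
      then obtain R where R: "fitz ?S w = ereal R" using False by (cases "fitz ?S w") auto
      have "x \<in> core V" using ao xV by (simp add: alg_open_def)
      then obtain e where e: "e > 0" "\<And>t. 0 \<le> t \<Longrightarrow> t \<le> e \<Longrightarrow> x + t *\<^sub>R (xw - x) \<in> V"
        unfolding core_def by blast
      have "g x + xs xw - xs x \<le> R"
      proof (rule small_le[of "min e 1"])
        fix t :: real assume t: "0 < t" "t \<le> min e 1"
        let ?z = "(t *\<^sub>R xw + (1 - t) *\<^sub>R x, \<lambda>u. t * g u + (1 - t) * xs u)"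
        have zt: "?z \<in> Zset tau" using gd xsd by (auto simp: Zset_def intro: dual_comb)
        have "t *\<^sub>R xw + (1 - t) *\<^sub>R x = x + t *\<^sub>R (xw - x)" by (simp add: algebra_simps)
        then have ztV: "fst ?z \<in> V" using e(2)[of t] t by simp
        have "cpl ?z \<le> fitz ?S ?z" using NI zt ztV unfolding V_NI_def by blast
        moreover have "fitz ?S ?z \<le> ereal (t * R + (1 - t) * xs x)"
          using fitz_convex[OF ST, of xw g R x xs "xs x" t] R wx eqz zx t by (simp add: cpl_def)
        ultimately have "cpl ?z \<le> ereal (t * R + (1 - t) * xs x)" by (rule order_trans)
        then have "t * t * g xw + t * (1 - t) * (g x + xs xw) + (1 - t) * (1 - t) * xs x \<le> t * R + (1 - t) * xs x"
          using cpl_comb[OF gd xsd, of t xw x] by simp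
        from alg_key[OF t(1) this]
        show "g x + xs xw - xs x \<le> R + t * (g x + xs xw - xs x - g xw)" by simp
      qed (use e in simp)
      then show ?thesis using wx R by simp
    qed
    have "h z \<le> cpl z"
    proof (rule ccontr)
      assume "\<not> h z \<le> cpl z"
      then have "cpl z < h z" by simp
      then obtain r where r: "cpl z < ereal r" "ereal r < h z" using ereal_dense2 by blast
      have "h s0 < \<infinity>" using Sh[OF s0] by simp
      then obtain \<alpha> y ys where ys: "ys \<in> dual_space tau"
          and ell: "\<forall>w\<in>Zset tau. ereal (\<alpha> + ys (fst w) + snd w y) \<le> h w"
          and rz: "r \<le> \<alpha> + ys x + xs y"
        using key_sep[OF lcs cvx lsc us0d minor _ _ _ , of s0 x xs r] s0 SZ zZ zx r(2) by blast
      have "fitz ?S (y, ys) \<le> ereal (- \<alpha>)"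
      proof (rule fitz_least)
        fix u us assume uS: "(u, us) \<in> ?S"
        have "ereal (\<alpha> + ys u + us y) \<le> h (u, us)" using ell uS SZ by fastforce
        also have "\<dots> = ereal (us u)" using Sh[OF uS] by (simp add: cpl_def)
        finally show "ereal (snd (y, ys) u + us (fst (y, ys)) - us u) \<le> ereal (- \<alpha>)" by simp
      qed
      moreover have "(y, ys) \<in> Zset tau" using ys by (simp add: Zset_def)
      from deriv[OF this] have "ereal (ys x + xs y - xs x) \<le> fitz ?S (y, ys)" by simp
      ultimately have "ys x + xs y - xs x \<le> - \<alpha>" by (metis ereal_less_eq(3) order_trans)
      moreover have "xs x < r" using r(1) zx by (simp add: cpl_def)
      ultimately show False using rz by linarith
    qed
    then have "h z = cpl z" using ge[OF zZ] by (rule antisym)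
    then have "z \<in> ?S" using hS zZ xV zx by blast
    then show "z \<in> T" by (simp add: restr_def)
  qed
  show ?thesis using MC ident by blast
qed

theorem theorem3p1:
  fixes tau :: "'a::real_vector topology"
    and T :: "('a \<times> ('a \<Rightarrow> real)) set"
    and V :: "'a set"
  assumes "lcs tau"
    and "\<exists>x::'a. x \<noteq> 0"
    and "T \<subseteq> UNIV \<times> dual_space tau"
    and "V \<inter> Domain T \<noteq> {}"
  shows "((M_class (restr T V) \<and> V_identifies tau V T) \<longrightarrow>
            (V_representable tau V T \<and> V_locates tau V T))
       \<and> ((V_representable tau V T \<and> V_locates tau V T) \<longrightarrow>
            (V_representable tau V T \<and> V_NI tau V T))
       \<and> (alg_open V \<longrightarrow>
            ((V_representable tau V T \<and> V_NI tau V T) \<longrightarrow>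
             (M_class (restr T V) \<and> V_identifies tau V T)))"
  using part1[OF assms(1,3,4)] part2 part3[OF assms(1,3,4)] by blast


end
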